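(* The first-order theory $T_{\mathrm{as\text{-}irr}}$ is $\aleph_0$-categorical, has no finite models, and is therefore complete.
   Context: $T_{\mathrm{as\text{-}irr}}$ is the first-order theory in the language with one binary relation $<$ consisting of: $\forall x\,\neg(x<x)$; $\forall x,y,z((x<y\wedge y<z)\rightarrow x<z)$; (Depth-at-least-3) $\exists x_0,x_1,x_2(x_0<x_1\wedge x_1<x_2)$; (Depth-at-most-3) $\neg\exists x_0,x_1,x_2,x_3(x_0<x_1\wedge x_1<x_2\wedge x_2<x_3)$; and the following extension axioms, where $L_1$ is the (first-order definable) set of minimal elements, $L_2$ the set of elements immediately succeeding (covering) an element of $L_1$, and $L_3$ the set of elements immediately succeeding an element of $L_2$: (a) for all $j,k,l\ge0$: for all distinct $x_0,\dots,x_{k-1},y_0,\dots,y_{j-1}\in L_2$ and distinct $z_0,\dots,z_{l-1}\in L_1$ there is $z\in L_1$ different from all $z_i$ with $\bigwedge_{i<k}z<x_i\wedge\bigwedge_{i<j}\neg(z<y_i)$; (b) for all $j,k,l\ge0$: for all distinct $x_0,\dots,x_{k-1},y_0,\dots,y_{j-1}\in L_2$ and distinct $z_0,\dots,z_{l-1}\in L_3$ there is $z\in L_3$ different from all $z_i$ with $\bigwedge_{i<k}x_i<z\wedge\bigwedge_{i<j}\neg(y_i<z)$; (c) for all $j,j',k,k',l\ge0$: for all distinct $x_0,\dots,x_{k-1},y_0,\dots,y_{j-1}\in L_1$, distinct $x'_0,\dots,x'_{k'-1},y'_0,\dots,y'_{j'-1}\in L_3$ and distinct $z_0,\dots,z_{l-1}\in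 L_2$ there is $z\in L_2$ different from all $z_i$ with $\bigwedge_{i<k}x_i<z\wedge\bigwedge_{i<j}\neg(y_i<z)\wedge\bigwedge_{i<k'}z<x'_i\wedge\bigwedge_{i<j'}\neg(z<y'_i)$. *)

theory Defs
  imports Main "HOL-Library.Countable_Set"
begin

datatype fm = TT | Eq nat nat | Lt nat nat | Neg fm | Conj fm fm | Ex nat fm

fun fv :: "fm \<Rightarrow> nat set" where
  "fv TT = {}"
| "fv (Eq x y) = {x, y}"
| "fv (Lt x y) = {x, y}"
| "fv (Neg p) = fv p"
| "fv (Conj p q) = fv p \<union> fv q"
| "fv (Ex x p) = fv p - {x}"

definition sentence :: "fm \<Rightarrow> bool" where
  "sentence p \<longleftrightarrow> fv p = {}"

fun sat :: "'a set \<Rightarrow> ('a \<Rightarrow> 'a \<Rightarrow> bool) \<Rightarrow> (nat \<Rightarrow> 'a) \<Rightarrow> fm \<Rightarrow> bool" where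
  "sat D R e TT = True"
| "sat D R e (Eq x y) = (e x = e y)"
| "sat D R e (Lt x y) = R (e x) (e y)"
| "sat D R e (Neg p) = (\<not> sat D R e p)"
| "sat D R e (Conj p q) = (sat D R e p \<and> sat D R e q)"
| "sat D R e (Ex x p) = (\<exists>a\<in>D. sat D R (e(x := a)) p)"

definition holds :: "'a set \<Rightarrow> ('a \<Rightarrow> 'a \<Rightarrow> bool) \<Rightarrow> fm \<Rightarrow> bool" where
  "holds D R p \<longleftrightarrow> (\<forall>e. range e \<subseteq> D \<longrightarrow> sat D R e p)"

definition is_model :: "'a set \<Rightarrow> ('a \<Rightarrow> 'a \<Rightarrow> bool) \<Rightarrow> fm set \<Rightarrow> bool" where
  "is_model D R T \<longleftrightarrow> D \<noteq> {} \<and> (\<forall>p\<in>T. holds D R p)"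

definition isomorphic :: "'a set \<Rightarrow> ('a \<Rightarrow> 'a \<Rightarrow> bool) \<Rightarrow> 'b set \<Rightarrow> ('b \<Rightarrow> 'b \<Rightarrow> bool) \<Rightarrow> bool" where
  "isomorphic D1 R1 D2 R2 \<longleftrightarrow>
     (\<exists>f. bij_betw f D1 D2 \<and> (\<forall>x\<in>D1. \<forall>y\<in>D1. R1 x y \<longleftrightarrow> R2 (f x) (f y)))"

definition Or :: "fm \<Rightarrow> fm \<Rightarrow> fm" where "Or p q = Neg (Conj (Neg p) (Neg q))"
definition Imp :: "fm \<Rightarrow> fm \<Rightarrow> fm" where "Imp p q = Neg (Conj p (Neg q))"
definition All :: "nat \<Rightarrow> fm \<Rightarrow> fm" where "All x p = Neg (Ex x (Neg p))"

definition Ands :: "fm list \<Rightarrow> fm" where "Ands ps = foldr Conj ps TT"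
definition Alls :: "nat list \<Rightarrow> fm \<Rightarrow> fm" where "Alls vs p = foldr All vs p"

definition distinctF :: "nat list \<Rightarrow> fm" where
  "distinctF vs = Ands [Neg (Eq (vs ! i) (vs ! j)). i \<leftarrow> [0..<length vs], j \<leftarrow> [0..<length vs], i < j]"

text \<open>In the following, x is the free variable and b (and b+1, b+2, ...) are bound
  variables; they are always used with x < b, so no variable capture occurs.\<close>

definition covers :: "nat \<Rightarrow> nat \<Rightarrow> nat \<Rightarrow> fm" where
  "covers a b w = Conj (Lt b a) (Neg (Ex w (Conj (Lt b w) (Lt w a))))"

definition L1f :: "nat \<Rightarrow> nat \<Rightarrow> fm" where
  "L1f x b = Neg (Ex b (Lt b x))"

definition L2f :: "nat \<Rightarrow> nat \<Rightarrow> fm" where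
  "L2f x b = Ex b (Conj (L1f b (b + 1)) (covers x b (b + 1)))"

definition L3f :: "nat \<Rightarrow> nat \<Rightarrow> fm" where
  "L3f x b = Ex b (Conj (L2f b (b + 1)) (covers x b (b + 1)))"

definition ax_irr :: fm where "ax_irr = All 0 (Neg (Lt 0 0))"

definition ax_trans :: fm where
  "ax_trans = Alls [0, 1, 2] (Imp (Conj (Lt 0 1) (Lt 1 2)) (Lt 0 2))"

definition ax_depth_ge3 :: fm where
  "ax_depth_ge3 = Ex 0 (Ex 1 (Ex 2 (Conj (Lt 0 1) (Lt 1 2))))"

definition ax_depth_le3 :: fm where
  "ax_depth_le3 = Neg (Ex 0 (Ex 1 (Ex 2 (Ex 3 (Conj (Lt 0 1) (Conj (Lt 1 2) (Lt 2 3)))))))"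

text \<open>Extension axiom (a) for parameters j, k, l. Variables: x_i = i (i<k),
  y_i = k+i (i<j), z_i = k+j+i (i<l), z = k+j+l; bound helper variables start at k+j+l+1.\<close>
definition axA :: "nat \<Rightarrow> nat \<Rightarrow> nat \<Rightarrow> fm" where
  "axA j k l = (let xs = [0..<k]; ys = [k..<k+j]; zs = [k+j..<k+j+l]; z = k+j+l; B = z+1 in
     Alls (xs @ ys @ zs)
      (Imp (Ands (map (\<lambda>v. L2f v B) (xs @ ys) @ map (\<lambda>v. L1f v B) zs @ [distinctF (xs @ ys), distinctF zs]))
           (Ex z (Ands ([L1f z B] @ map (\<lambda>v. Neg (Eq z v)) zs
                        @ map (\<lambda>v. Lt z v) xs @ map (\<lambda>v. Neg (Lt z v)) ys)))))"

definition axB :: "nat \<Rightarrow> nat \<Rightarrow> nat \<Rightarrow> fm" where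
  "axB j k l = (let xs = [0..<k]; ys = [k..<k+j]; zs = [k+j..<k+j+l]; z = k+j+l; B = z+1 in
     Alls (xs @ ys @ zs)
      (Imp (Ands (map (\<lambda>v. L2f v B) (xs @ ys) @ map (\<lambda>v. L3f v B) zs @ [distinctF (xs @ ys), distinctF zs]))
           (Ex z (Ands ([L3f z B] @ map (\<lambda>v. Neg (Eq z v)) zs
                        @ map (\<lambda>v. Lt v z) xs @ map (\<lambda>v. Neg (Lt v z)) ys)))))"

definition axC :: "nat \<Rightarrow> nat \<Rightarrow> nat \<Rightarrow> nat \<Rightarrow> nat \<Rightarrow> fm" where
  "axC j j' k k' l = (let xs = [0..<k]; ys = [k..<k+j]; xs' = [k+j..<k+j+k'];
       ys' = [k+j+k'..<k+j+k'+j']; zs = [k+j+k'+j'..<k+j+k'+j'+l];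
       z = k+j+k'+j'+l; B = z+1 in
     Alls (xs @ ys @ xs' @ ys' @ zs)
      (Imp (Ands (map (\<lambda>v. L1f v B) (xs @ ys) @ map (\<lambda>v. L3f v B) (xs' @ ys')
                  @ map (\<lambda>v. L2f v B) zs
                  @ [distinctF (xs @ ys), distinctF (xs' @ ys'), distinctF zs]))
           (Ex z (Ands ([L2f z B] @ map (\<lambda>v. Neg (Eq z v)) zs
                        @ map (\<lambda>v. Lt v z) xs @ map (\<lambda>v. Neg (Lt v z)) ys
                        @ map (\<lambda>v. Lt z v) xs' @ map (\<lambda>v. Neg (Lt z v)) ys')))))"

definition T_as_irr :: "fm set" where
  "T_as_irr = {ax_irr, ax_trans, ax_depth_ge3, ax_depth_le3}
     \<union> {axA j k l | j k l. True}
     \<union> {axB j k l | j k l. True}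
     \<union> {axC j j' k k' l | j j' k k' l. True}"

end

theory Submission
  imports Defs "HOL-Library.Nat_Bijection"
begin


definition lev1 :: "'a set \<Rightarrow> ('a \<Rightarrow> 'a \<Rightarrow> bool) \<Rightarrow> 'a \<Rightarrow> bool" where
  "lev1 D R a \<longleftrightarrow> \<not>(\<exists>b\<in>D. R b a)"
definition cov :: "'a set \<Rightarrow> ('a \<Rightarrow> 'a \<Rightarrow> bool) \<Rightarrow> 'a \<Rightarrow> 'a \<Rightarrow> bool" where
  "cov D R a b \<longleftrightarrow> R b a \<and> \<not>(\<exists>c\<in>D. R b c \<and> R c a)"
definition lev2 :: "'a set \<Rightarrow> ('a \<Rightarrow> 'a \<Rightarrow> bool) \<Rightarrow> 'a \<Rightarrow> bool" where
  "lev2 D R a \<longleftrightarrow> (\<exists>b\<in>D. lev1 D R b \<and> cov D R a b)"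
definition lev3 :: "'a set \<Rightarrow> ('a \<Rightarrow> 'a \<Rightarrow> bool) \<Rightarrow> 'a \<Rightarrow> bool" where
  "lev3 D R a \<longleftrightarrow> (\<exists>b\<in>D. lev2 D R b \<and> cov D R a b)"

lemma sat_L1f: "x \<noteq> b \<Longrightarrow> sat D R e (L1f x b) = lev1 D R (e x)"
  by (simp add: L1f_def lev1_def)

lemma sat_covers: "w \<noteq> a \<Longrightarrow> w \<noteq> b \<Longrightarrow> sat D R e (covers a b w) = cov D R (e a) (e b)"
  by (simp add: covers_def cov_def)

lemma sat_L2f: "x \<noteq> b \<Longrightarrow> x \<noteq> Suc b \<Longrightarrow> sat D R e (L2f x b) = lev2 D R (e x)"
  by (simp add: L2f_def lev2_def sat_L1f sat_covers)

lemma sat_L3f: "x \<noteq> b \<Longrightarrow> x \<noteq> Suc b \<Longrightarrow> sat D R e (L3f x b) = lev3 D R (e x)"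
  by (simp add: L3f_def lev3_def sat_L2f sat_covers)

lemma sat_L1f_lt: "x < b \<Longrightarrow> sat D R e (L1f x b) = lev1 D R (e x)" by (simp add: sat_L1f)
lemma sat_L2f_lt: "x < b \<Longrightarrow> sat D R e (L2f x b) = lev2 D R (e x)" by (simp add: sat_L2f)
lemma sat_L3f_lt: "x < b \<Longrightarrow> sat D R e (L3f x b) = lev3 D R (e x)" by (simp add: sat_L3f)

lemma ball_map_cong: "(\<And>v. v \<in> set L \<Longrightarrow> sat D R e (f v) = Q (e v)) \<Longrightarrow>
   (\<forall>p\<in>set (map f L). sat D R e p) = (\<forall>x\<in>set (map e L). Q x)" by auto

lemma sat_Ands: "sat D R e (Ands ps) = (\<forall>p\<in>set ps. sat D R e p)"
  by (induction ps) (auto simp: Ands_def)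

lemma sat_distinctF: "sat D R e (distinctF vs) = distinct (map e vs)"
  unfolding distinctF_def sat_Ands distinct_conv_nth
  apply auto
  by (metis atLeastLessThan_iff Int_iff mem_Collect_eq linorder_neqE_nat zero_le)

fun upd :: "(nat \<Rightarrow> 'a) \<Rightarrow> nat list \<Rightarrow> 'a list \<Rightarrow> nat \<Rightarrow> 'a" where
  "upd e (v#vs) (a#as) = upd (e(v:=a)) vs as"
| "upd e _ _ = e"

lemma sat_Alls: "sat D R e (Alls vs p) \<longleftrightarrow> (\<forall>as. length as = length vs \<and> set as \<subseteq> D \<longrightarrow> sat D R (upd e vs as) p)"
proof (induction vs arbitrary: e)
  case Nil
  then show ?case by (simp add: Alls_def)
next
  case (Cons v vs)
  have "sat D R e (Alls (v#vs) p) = (\<forall>a\<in>D. sat D R (e(v:=a)) (Alls vs p))"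
    by (simp add: Alls_def All_def)
  also have "\<dots> = (\<forall>as. length as = length (v#vs) \<and> set as \<subseteq> D \<longrightarrow> sat D R (upd e (v#vs) as) p)"
    unfolding Cons.IH
    apply (auto simp: length_Suc_conv)
    by (metis list.set_intros upd.simps(1) insert_subset list.simps(15))
  finally show ?case .
qed

lemma upd_upt: "length as = n \<Longrightarrow> upd e [m..<m+n] as = (\<lambda>i. if m \<le> i \<and> i < m+n then as!(i-m) else e i)"
proof (induction as arbitrary: m n e)
  case Nil
  then show ?case by (auto simp: fun_eq_iff)
next
  case (Cons a as)
  then obtain n' where n: "n = Suc n'" "length as = n'" by auto
  have "[m..<m+n] = m # [Suc m..<Suc m + n']" using n by (simp add: upt_conv_Cons del: upt_Suc)
  then have "upd e [m..<m+n] (a#as) = upd (e(m:=a)) [Suc m..<Suc m + n'] as" by simp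
  also have "\<dots> = (\<lambda>i. if Suc m \<le> i \<and> i < Suc m+n' then as!(i-Suc m) else (e(m:=a)) i)"
    using Cons.IH[OF n(2), of "e(m:=a)" "Suc m"] by (simp only: add_Suc)
  finally show ?case using n
    by (auto simp: fun_eq_iff nth_Cons' )
qed

lemma map_upd_seg: "length as = n \<Longrightarrow> a \<le> b \<Longrightarrow> b \<le> n \<Longrightarrow>
   map (\<lambda>i. if i < n then as!i else e i) [a..<b] = take (b-a) (drop a as)"
  by (auto intro!: nth_equalityI)

lemma sat_Ands_append: "sat D R e (Ands (A @ B)) = (sat D R e (Ands A) \<and> sat D R e (Ands B))"
  by (auto simp: sat_Ands)

lemma sat_Ands_map: "(\<And>v. v \<in> set L \<Longrightarrow> sat D R e (f v) = Q (e v)) \<Longrightarrow>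
   sat D R e (Ands (map f L)) = (\<forall>x\<in>set (map e L). Q x)" by (auto simp: sat_Ands)

lemma sat_Ands_map_upd: "(\<And>v. v \<in> set L \<Longrightarrow> v < z) \<Longrightarrow> (\<And>v. v < z \<Longrightarrow> sat D R (e(z:=cc)) (f v) = Q (e v)) \<Longrightarrow>
   sat D R (e(z:=cc)) (Ands (map f L)) = (\<forall>x\<in>set (map e L). Q x)" by (auto simp: sat_Ands)

lemma sat_bodyA:
  assumes "\<forall>v\<in>set (XS@YS@ZS). v < z" "B = z+1"
  shows "sat D R e (Imp (Ands (map (\<lambda>v. L2f v B) (XS @ YS) @ map (\<lambda>v. L1f v B) ZS @ [distinctF (XS @ YS), distinctF ZS]))
           (Ex z (Ands ([L1f z B] @ map (\<lambda>v. Neg (Eq z v)) ZS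
                        @ map (\<lambda>v. Lt z v) XS @ map (\<lambda>v. Neg (Lt z v)) YS)))) \<longleftrightarrow>
    ((\<forall>x\<in>set (map e (XS@YS)). lev2 D R x) \<and> (\<forall>x\<in>set (map e ZS). lev1 D R x)
      \<and> distinct (map e (XS@YS)) \<and> distinct (map e ZS) \<longrightarrow>
     (\<exists>c\<in>D. lev1 D R c \<and> (\<forall>x\<in>set (map e ZS). c \<noteq> x) \<and> (\<forall>x\<in>set (map e XS). R c x)
        \<and> (\<forall>x\<in>set (map e YS). \<not> R c x)))"
proof -
  have a: "\<And>v. v \<in> set (XS@YS) \<Longrightarrow> v < z" "\<And>v. v \<in> set XS \<Longrightarrow> v < z" "\<And>v. v \<in> set YS \<Longrightarrow> v < z" "\<And>v. v \<in> set ZS \<Longrightarrow> v < z"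
    using assms(1) by auto
  have P1: "sat D R e (Ands (map (\<lambda>v. L2f v B) (XS @ YS) @ map (\<lambda>v. L1f v B) ZS @ [distinctF (XS @ YS), distinctF ZS]))
     = ((\<forall>x\<in>set (map e (XS@YS)). lev2 D R x) \<and> (\<forall>x\<in>set (map e ZS). lev1 D R x)
      \<and> distinct (map e (XS@YS)) \<and> distinct (map e ZS))"
    unfolding sat_Ands_append
    apply (subst sat_Ands_map[where Q="lev2 D R"])
     apply (rule sat_L2f_lt, use a assms(2) in force)
    apply (subst sat_Ands_map[where Q="lev1 D R"])
     apply (rule sat_L1f_lt, use a assms(2) in force)
    apply (simp add: sat_distinctF Ands_def)
    done
  have P2: "sat D R (e(z:=cc)) (Ands ([L1f z B] @ map (\<lambda>v. Neg (Eq z v)) ZS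
                        @ map (\<lambda>v. Lt z v) XS @ map (\<lambda>v. Neg (Lt z v)) YS))
     = (lev1 D R cc \<and> (\<forall>x\<in>set (map e ZS). cc \<noteq> x) \<and> (\<forall>x\<in>set (map e XS). R cc x)
        \<and> (\<forall>x\<in>set (map e YS). \<not> R cc x))" for cc
    unfolding sat_Ands_append
    apply (subst sat_Ands_map_upd[where Q="\<lambda>x. cc \<noteq> x"], rule a(4), assumption, simp)
    apply (subst sat_Ands_map_upd[where Q="\<lambda>x. R cc x"], rule a(2), assumption, simp)
    apply (subst sat_Ands_map_upd[where Q="\<lambda>x. \<not> R cc x"], rule a(3), assumption, simp)
    apply (simp add: sat_L1f assms(2) Ands_def)
    done
  show ?thesis
    unfolding Imp_def sat.simps P1 P2 by blast
qed

definition PA :: "'a set \<Rightarrow> ('a \<Rightarrow> 'a \<Rightarrow> bool) \<Rightarrow> 'a list \<Rightarrow> 'a list \<Rightarrow> 'a list \<Rightarrow> bool" where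
  "PA D R xs ys zs \<longleftrightarrow> ((\<forall>x\<in>set (xs@ys). lev2 D R x) \<and> (\<forall>x\<in>set zs. lev1 D R x)
      \<and> distinct (xs@ys) \<and> distinct zs \<longrightarrow>
     (\<exists>c\<in>D. lev1 D R c \<and> (\<forall>x\<in>set zs. c \<noteq> x) \<and> (\<forall>x\<in>set xs. R c x)
        \<and> (\<forall>x\<in>set ys. \<not> R c x)))"

lemma vl3: "[0..<k] @ [k..<k+j] @ [k+j..<k+j+l] = [0..<k+j+l]"
proof -
  have 1: "[0..<k+j+l] = [0..<k] @ [k..<k+j+l]" using upt_add_eq_append[of 0 k "j+l"] by (simp add: add.assoc)
  have 2: "[k..<k+j+l] = [k..<k+j] @ [k+j..<k+j+l]" using upt_add_eq_append[of k "k+j" l] by simp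
  show ?thesis using 1 2 by simp
qed

lemma holds_Alls_upt:
  assumes "D \<noteq> {}"
    and "\<And>e as. range e \<subseteq> D \<Longrightarrow> length as = n \<Longrightarrow> set as \<subseteq> D \<Longrightarrow>
            sat D R (\<lambda>i. if i < n then as!i else e i) p = Q as"
  shows "holds D R (Alls [0..<n] p) = (\<forall>as. length as = n \<and> set as \<subseteq> D \<longrightarrow> Q as)"
proof -
  obtain d where d: "d \<in> D" using assms(1) by auto
  have u: "upd e [0..<n] as = (\<lambda>i. if i < n then as!i else e i)" if "length as = n" for e and as :: "'a list"
    using upd_upt[OF that, of e 0] by (simp add: fun_eq_iff)
  show ?thesis
    unfolding holds_def sat_Alls length_upt diff_zero
  proof (intro iffI allI impI)
    fix as :: "'a list" assume h: "\<forall>e. range e \<subseteq> D \<longrightarrow> (\<forall>as. length as = n \<and> set as \<subseteq> D \<longrightarrow> sat D R (upd e [0..<n] as) p)"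
      and as: "length as = n \<and> set as \<subseteq> D"
    have r: "range (\<lambda>_. d) \<subseteq> D" using d by auto
    show "Q as" using h[rule_format, OF r, of as] as assms(2)[OF r] u by auto
  next
    fix e :: "nat \<Rightarrow> 'a" and as :: "'a list" assume h: "\<forall>as. length as = n \<and> set as \<subseteq> D \<longrightarrow> Q as"
      and r: "range e \<subseteq> D" and as: "length as = n \<and> set as \<subseteq> D"
    show "sat D R (upd e [0..<n] as) p" using h as assms(2)[OF r] u by auto
  qed
qed

lemma take_drop_split: "length xs = k \<Longrightarrow> length ys = j \<Longrightarrow>
   take k (xs@ys@zs) = xs \<and> take j (drop k (xs@ys@zs)) = ys \<and> drop (k+j) (xs@ys@zs) = zs"
  by auto

lemma holds_axA: "D \<noteq> {} \<Longrightarrow> holds D R (axA j k l) \<longleftrightarrow>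
   (\<forall>xs ys zs. length xs = k \<and> length ys = j \<and> length zs = l \<and> set (xs@ys@zs) \<subseteq> D \<longrightarrow> PA D R xs ys zs)"
proof -
  assume D: "D \<noteq> {}"
  have "holds D R (axA j k l) = (\<forall>as. length as = k+j+l \<and> set as \<subseteq> D \<longrightarrow>
          PA D R (take k as) (take j (drop k as)) (drop (k+j) as))"
    unfolding axA_def Let_def vl3
  proof (rule holds_Alls_upt[OF D])
    fix e and as :: "'a list"
    assume as: "length as = k+j+l"
    let ?E = "\<lambda>i. if i < k+j+l then as!i else e i"
    have m1: "map ?E [0..<k] = take k as" using map_upd_seg[OF as, of 0 k e] by simp
    have m2: "map ?E [k..<k+j] = take j (drop k as)" using map_upd_seg[OF as, of k "k+j" e] by simp
    have m3: "map ?E [k+j..<k+j+l] = drop (k+j) as" using map_upd_seg[OF as, of "k+j" "k+j+l" e] as by simp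
    show "sat D R ?E (Imp (Ands (map (\<lambda>v. L2f v (k+j+l+1)) ([0..<k] @ [k..<k+j]) @ map (\<lambda>v. L1f v (k+j+l+1)) [k+j..<k+j+l] @
                [distinctF ([0..<k] @ [k..<k+j]), distinctF [k+j..<k+j+l]]))
         (Ex (k+j+l) (Ands ([L1f (k+j+l) (k+j+l+1)] @ map (\<lambda>v. Neg (Eq (k+j+l) v)) [k+j..<k+j+l] @ map (Lt (k+j+l)) [0..<k] @
                    map (\<lambda>v. Neg (Lt (k+j+l) v)) [k..<k+j]))))
      = PA D R (take k as) (take j (drop k as)) (drop (k+j) as)"
      apply (subst sat_bodyA[where z="k+j+l"])
        apply auto[2]
      unfolding PA_def map_append m1 m2 m3 by simp
  qed
  also have "\<dots> = (\<forall>xs ys zs. length xs = k \<and> length ys = j \<and> length zs = l \<and> set (xs@ys@zs) \<subseteq> D \<longrightarrow> PA D R xs ys zs)"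
  proof (intro iffI allI impI)
    fix xs ys zs :: "'a list"
    assume h: "\<forall>as. length as = k + j + l \<and> set as \<subseteq> D \<longrightarrow> PA D R (take k as) (take j (drop k as)) (drop (k + j) as)"
      and a: "length xs = k \<and> length ys = j \<and> length zs = l \<and> set (xs @ ys @ zs) \<subseteq> D"
    then show "PA D R xs ys zs" using h[rule_format, of "xs@ys@zs"] by simp
  next
    fix as :: "'a list"
    assume h: "\<forall>xs ys zs. length xs = k \<and> length ys = j \<and> length zs = l \<and> set (xs @ ys @ zs) \<subseteq> D \<longrightarrow> PA D R xs ys zs"
      and a: "length as = k + j + l \<and> set as \<subseteq> D"
    have e: "as = take k as @ take j (drop k as) @ drop (k+j) as"
      by (metis append_take_drop_id drop_drop add.commute)
    show "PA D R (take k as) (take j (drop k as)) (drop (k + j) as)"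
      apply (rule h[rule_format])
      using a e by auto
  qed
  finally show ?thesis .
qed

lemma sat_bodyB:
  assumes "\<forall>v\<in>set (XS@YS@ZS). v < z" "B = z+1"
  shows "sat D R e (Imp (Ands (map (\<lambda>v. L2f v B) (XS @ YS) @ map (\<lambda>v. L3f v B) ZS @ [distinctF (XS @ YS), distinctF ZS]))
           (Ex z (Ands ([L3f z B] @ map (\<lambda>v. Neg (Eq z v)) ZS
                        @ map (\<lambda>v. Lt v z) XS @ map (\<lambda>v. Neg (Lt v z)) YS)))) \<longleftrightarrow>
    ((\<forall>x\<in>set (map e (XS@YS)). lev2 D R x) \<and> (\<forall>x\<in>set (map e ZS). lev3 D R x)
      \<and> distinct (map e (XS@YS)) \<and> distinct (map e ZS) \<longrightarrow>
     (\<exists>c\<in>D. lev3 D R c \<and> (\<forall>x\<in>set (map e ZS). c \<noteq> x) \<and> (\<forall>x\<in>set (map e XS). R x c)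
        \<and> (\<forall>x\<in>set (map e YS). \<not> R x c)))"
proof -
  have a: "\<And>v. v \<in> set (XS@YS) \<Longrightarrow> v < z" "\<And>v. v \<in> set XS \<Longrightarrow> v < z" "\<And>v. v \<in> set YS \<Longrightarrow> v < z" "\<And>v. v \<in> set ZS \<Longrightarrow> v < z"
    using assms(1) by auto
  have P1: "sat D R e (Ands (map (\<lambda>v. L2f v B) (XS @ YS) @ map (\<lambda>v. L3f v B) ZS @ [distinctF (XS @ YS), distinctF ZS]))
     = ((\<forall>x\<in>set (map e (XS@YS)). lev2 D R x) \<and> (\<forall>x\<in>set (map e ZS). lev3 D R x)
      \<and> distinct (map e (XS@YS)) \<and> distinct (map e ZS))"
    unfolding sat_Ands_append
    apply (subst sat_Ands_map[where Q="lev2 D R"])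
     apply (rule sat_L2f_lt, use a assms(2) in force)
    apply (subst sat_Ands_map[where Q="lev3 D R"])
     apply (rule sat_L3f_lt, use a assms(2) in force)
    apply (simp add: sat_distinctF Ands_def)
    done
  have P2: "sat D R (e(z:=cc)) (Ands ([L3f z B] @ map (\<lambda>v. Neg (Eq z v)) ZS
                        @ map (\<lambda>v. Lt v z) XS @ map (\<lambda>v. Neg (Lt v z)) YS))
     = (lev3 D R cc \<and> (\<forall>x\<in>set (map e ZS). cc \<noteq> x) \<and> (\<forall>x\<in>set (map e XS). R x cc)
        \<and> (\<forall>x\<in>set (map e YS). \<not> R x cc))" for cc
    unfolding sat_Ands_append
    apply (subst sat_Ands_map_upd[where Q="\<lambda>x. cc \<noteq> x"], rule a(4), assumption, simp)
    apply (subst sat_Ands_map_upd[where Q="\<lambda>x. R x cc"], rule a(2), assumption, simp)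
    apply (subst sat_Ands_map_upd[where Q="\<lambda>x. \<not> R x cc"], rule a(3), assumption, simp)
    apply (simp add: sat_L3f assms(2) Ands_def)
    done
  show ?thesis
    unfolding Imp_def sat.simps P1 P2 by blast
qed

definition PB :: "'a set \<Rightarrow> ('a \<Rightarrow> 'a \<Rightarrow> bool) \<Rightarrow> 'a list \<Rightarrow> 'a list \<Rightarrow> 'a list \<Rightarrow> bool" where
  "PB D R xs ys zs \<longleftrightarrow> ((\<forall>x\<in>set (xs@ys). lev2 D R x) \<and> (\<forall>x\<in>set zs. lev3 D R x)
      \<and> distinct (xs@ys) \<and> distinct zs \<longrightarrow>
     (\<exists>c\<in>D. lev3 D R c \<and> (\<forall>x\<in>set zs. c \<noteq> x) \<and> (\<forall>x\<in>set xs. R x c)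
        \<and> (\<forall>x\<in>set ys. \<not> R x c)))"

lemma split3: "as = take k as @ take j (drop k as) @ drop (k+j) as"
  by (metis append_take_drop_id drop_drop add.commute)

lemma holds_axB: "D \<noteq> {} \<Longrightarrow> holds D R (axB j k l) \<longleftrightarrow>
   (\<forall>xs ys zs. length xs = k \<and> length ys = j \<and> length zs = l \<and> set (xs@ys@zs) \<subseteq> D \<longrightarrow> PB D R xs ys zs)"
proof -
  assume D: "D \<noteq> {}"
  have "holds D R (axB j k l) = (\<forall>as. length as = k+j+l \<and> set as \<subseteq> D \<longrightarrow>
          PB D R (take k as) (take j (drop k as)) (drop (k+j) as))"
    unfolding axB_def Let_def vl3
    apply (rule holds_Alls_upt[OF D])
    apply (subst sat_bodyB[where z="k+j+l"])
      apply auto[2]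
    subgoal for e as
      using map_upd_seg[of as "k+j+l" 0 k e] map_upd_seg[of as "k+j+l" k "k+j" e] map_upd_seg[of as "k+j+l" "k+j" "k+j+l" e]
      unfolding PB_def map_append by simp
    done
  also have "\<dots> = (\<forall>xs ys zs. length xs = k \<and> length ys = j \<and> length zs = l \<and> set (xs@ys@zs) \<subseteq> D \<longrightarrow> PB D R xs ys zs)"
  proof (intro iffI allI impI)
    fix xs ys zs :: "'a list"
    assume h: "\<forall>as. length as = k + j + l \<and> set as \<subseteq> D \<longrightarrow> PB D R (take k as) (take j (drop k as)) (drop (k + j) as)"
      and a: "length xs = k \<and> length ys = j \<and> length zs = l \<and> set (xs @ ys @ zs) \<subseteq> D"
    then show "PB D R xs ys zs" using h[rule_format, of "xs@ys@zs"] by simp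
  next
    fix as :: "'a list"
    assume h: "\<forall>xs ys zs. length xs = k \<and> length ys = j \<and> length zs = l \<and> set (xs @ ys @ zs) \<subseteq> D \<longrightarrow> PB D R xs ys zs"
      and a: "length as = k + j + l \<and> set as \<subseteq> D"
    show "PB D R (take k as) (take j (drop k as)) (drop (k + j) as)"
      apply (rule h[rule_format])
      using a split3[of as k j] by auto
  qed
  finally show ?thesis .
qed

lemma sat_bodyC:
  assumes "\<forall>v\<in>set (XS@YS@XS'@YS'@ZS). v < z" "B = z+1"
  shows "sat D R e (Imp (Ands (map (\<lambda>v. L1f v B) (XS @ YS) @ map (\<lambda>v. L3f v B) (XS' @ YS')
                  @ map (\<lambda>v. L2f v B) ZS
                  @ [distinctF (XS @ YS), distinctF (XS' @ YS'), distinctF ZS]))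
           (Ex z (Ands ([L2f z B] @ map (\<lambda>v. Neg (Eq z v)) ZS
                        @ map (\<lambda>v. Lt v z) XS @ map (\<lambda>v. Neg (Lt v z)) YS
                        @ map (\<lambda>v. Lt z v) XS' @ map (\<lambda>v. Neg (Lt z v)) YS')))) \<longleftrightarrow>
    ((\<forall>x\<in>set (map e (XS@YS)). lev1 D R x) \<and> (\<forall>x\<in>set (map e (XS'@YS')). lev3 D R x)
      \<and> (\<forall>x\<in>set (map e ZS). lev2 D R x)
      \<and> distinct (map e (XS@YS)) \<and> distinct (map e (XS'@YS')) \<and> distinct (map e ZS) \<longrightarrow>
     (\<exists>c\<in>D. lev2 D R c \<and> (\<forall>x\<in>set (map e ZS). c \<noteq> x) \<and> (\<forall>x\<in>set (map e XS). R x c)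
        \<and> (\<forall>x\<in>set (map e YS). \<not> R x c) \<and> (\<forall>x\<in>set (map e XS'). R c x)
        \<and> (\<forall>x\<in>set (map e YS'). \<not> R c x)))"
proof -
  have a: "\<And>v. v \<in> set (XS@YS) \<Longrightarrow> v < z" "\<And>v. v \<in> set XS \<Longrightarrow> v < z" "\<And>v. v \<in> set YS \<Longrightarrow> v < z" "\<And>v. v \<in> set ZS \<Longrightarrow> v < z"
    "\<And>v. v \<in> set (XS'@YS') \<Longrightarrow> v < z" "\<And>v. v \<in> set XS' \<Longrightarrow> v < z" "\<And>v. v \<in> set YS' \<Longrightarrow> v < z"
    using assms(1) by auto
  have P1: "sat D R e (Ands (map (\<lambda>v. L1f v B) (XS @ YS) @ map (\<lambda>v. L3f v B) (XS' @ YS')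
                  @ map (\<lambda>v. L2f v B) ZS
                  @ [distinctF (XS @ YS), distinctF (XS' @ YS'), distinctF ZS]))
     = ((\<forall>x\<in>set (map e (XS@YS)). lev1 D R x) \<and> (\<forall>x\<in>set (map e (XS'@YS')). lev3 D R x)
      \<and> (\<forall>x\<in>set (map e ZS). lev2 D R x)
      \<and> distinct (map e (XS@YS)) \<and> distinct (map e (XS'@YS')) \<and> distinct (map e ZS))"
    unfolding sat_Ands_append
    apply (subst sat_Ands_map[where Q="lev1 D R"])
     apply (rule sat_L1f_lt, use a assms(2) in force)
    apply (subst sat_Ands_map[where Q="lev3 D R"])
     apply (rule sat_L3f_lt, use a assms(2) in force)
    apply (subst sat_Ands_map[where Q="lev2 D R"])
     apply (rule sat_L2f_lt, use a assms(2) in force)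
    apply (simp add: sat_distinctF Ands_def)
    done
  have P2: "sat D R (e(z:=cc)) (Ands ([L2f z B] @ map (\<lambda>v. Neg (Eq z v)) ZS
                        @ map (\<lambda>v. Lt v z) XS @ map (\<lambda>v. Neg (Lt v z)) YS
                        @ map (\<lambda>v. Lt z v) XS' @ map (\<lambda>v. Neg (Lt z v)) YS'))
     = (lev2 D R cc \<and> (\<forall>x\<in>set (map e ZS). cc \<noteq> x) \<and> (\<forall>x\<in>set (map e XS). R x cc)
        \<and> (\<forall>x\<in>set (map e YS). \<not> R x cc) \<and> (\<forall>x\<in>set (map e XS'). R cc x)
        \<and> (\<forall>x\<in>set (map e YS'). \<not> R cc x))" for cc
    unfolding sat_Ands_append
    apply (subst sat_Ands_map_upd[where Q="\<lambda>x. cc \<noteq> x"], rule a(4), assumption, simp)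
    apply (subst sat_Ands_map_upd[where Q="\<lambda>x. R x cc"], rule a(2), assumption, simp)
    apply (subst sat_Ands_map_upd[where Q="\<lambda>x. \<not> R x cc"], rule a(3), assumption, simp)
    apply (subst sat_Ands_map_upd[where Q="\<lambda>x. R cc x"], rule a(6), assumption, simp)
    apply (subst sat_Ands_map_upd[where Q="\<lambda>x. \<not> R cc x"], rule a(7), assumption, simp)
    apply (simp add: sat_L2f assms(2) Ands_def)
    done
  show ?thesis
    unfolding Imp_def sat.simps P1 P2 by blast
qed

definition PC :: "'a set \<Rightarrow> ('a \<Rightarrow> 'a \<Rightarrow> bool) \<Rightarrow> 'a list \<Rightarrow> 'a list \<Rightarrow> 'a list \<Rightarrow> 'a list \<Rightarrow> 'a list \<Rightarrow> bool" where
  "PC D R xs ys xs' ys' zs \<longleftrightarrow> ((\<forall>x\<in>set (xs@ys). lev1 D R x) \<and> (\<forall>x\<in>set (xs'@ys'). lev3 D R x)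
      \<and> (\<forall>x\<in>set zs. lev2 D R x)
      \<and> distinct (xs@ys) \<and> distinct (xs'@ys') \<and> distinct zs \<longrightarrow>
     (\<exists>c\<in>D. lev2 D R c \<and> (\<forall>x\<in>set zs. c \<noteq> x) \<and> (\<forall>x\<in>set xs. R x c)
        \<and> (\<forall>x\<in>set ys. \<not> R x c) \<and> (\<forall>x\<in>set xs'. R c x) \<and> (\<forall>x\<in>set ys'. \<not> R c x)))"

lemma vl5: "[0..<k] @ [k..<k+j] @ [k+j..<k+j+k'] @ [k+j+k'..<k+j+k'+j'] @ [k+j+k'+j'..<k+j+k'+j'+l] = [0..<k+j+k'+j'+l]"
proof -
  have 1: "[0..<k+j+k'+j'+l] = [0..<k] @ [k..<k+j+k'+j'+l]" using upt_add_eq_append[of 0 k "j+k'+j'+l"] by (simp add: add.assoc)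
  have 2: "[k..<k+j+k'+j'+l] = [k..<k+j] @ [k+j..<k+j+k'+j'+l]" using upt_add_eq_append[of k "k+j" "k'+j'+l"] by (simp add: add.assoc)
  have 3: "[k+j..<k+j+k'+j'+l] = [k+j..<k+j+k'] @ [k+j+k'..<k+j+k'+j'+l]" using upt_add_eq_append[of "k+j" "k+j+k'" "j'+l"] by (simp add: add.assoc)
  have 4: "[k+j+k'..<k+j+k'+j'+l] = [k+j+k'..<k+j+k'+j'] @ [k+j+k'+j'..<k+j+k'+j'+l]" using upt_add_eq_append[of "k+j+k'" "k+j+k'+j'" l] by simp
  show ?thesis using 1 2 3 4 by simp
qed

lemma split5: "as = take k as @ take j (drop k as) @ take k' (drop (k+j) as) @ take j' (drop (k+j+k') as) @ drop (k+j+k'+j') as"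
  by (metis append_take_drop_id drop_drop add.commute)

lemma holds_axC: "D \<noteq> {} \<Longrightarrow> holds D R (axC j j' k k' l) \<longleftrightarrow>
   (\<forall>xs ys xs' ys' zs. length xs = k \<and> length ys = j \<and> length xs' = k' \<and> length ys' = j' \<and> length zs = l
     \<and> set (xs@ys@xs'@ys'@zs) \<subseteq> D \<longrightarrow> PC D R xs ys xs' ys' zs)"
proof -
  assume D: "D \<noteq> {}"
  have "holds D R (axC j j' k k' l) = (\<forall>as. length as = k+j+k'+j'+l \<and> set as \<subseteq> D \<longrightarrow>
          PC D R (take k as) (take j (drop k as)) (take k' (drop (k+j) as)) (take j' (drop (k+j+k') as)) (drop (k+j+k'+j') as))"
    unfolding axC_def Let_def vl5
    apply (rule holds_Alls_upt[OF D])
    apply (subst sat_bodyC[where z="k+j+k'+j'+l"])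
      apply auto[2]
    subgoal for e as
      using map_upd_seg[of as "k+j+k'+j'+l" 0 k e] map_upd_seg[of as "k+j+k'+j'+l" k "k+j" e]
        map_upd_seg[of as "k+j+k'+j'+l" "k+j" "k+j+k'" e] map_upd_seg[of as "k+j+k'+j'+l" "k+j+k'" "k+j+k'+j'" e]
        map_upd_seg[of as "k+j+k'+j'+l" "k+j+k'+j'" "k+j+k'+j'+l" e]
      unfolding PC_def map_append by simp
    done
  also have "\<dots> = (\<forall>xs ys xs' ys' zs. length xs = k \<and> length ys = j \<and> length xs' = k' \<and> length ys' = j' \<and> length zs = l
     \<and> set (xs@ys@xs'@ys'@zs) \<subseteq> D \<longrightarrow> PC D R xs ys xs' ys' zs)"
  proof (intro iffI allI impI)
    fix xs ys xs' ys' zs :: "'a list"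
    assume h: "\<forall>as. length as = k+j+k'+j'+l \<and> set as \<subseteq> D \<longrightarrow>
          PC D R (take k as) (take j (drop k as)) (take k' (drop (k+j) as)) (take j' (drop (k+j+k') as)) (drop (k+j+k'+j') as)"
      and a: "length xs = k \<and> length ys = j \<and> length xs' = k' \<and> length ys' = j' \<and> length zs = l
     \<and> set (xs@ys@xs'@ys'@zs) \<subseteq> D"
    then show "PC D R xs ys xs' ys' zs" using h[rule_format, of "xs@ys@xs'@ys'@zs"] by simp
  next
    fix as :: "'a list"
    assume h: "\<forall>xs ys xs' ys' zs. length xs = k \<and> length ys = j \<and> length xs' = k' \<and> length ys' = j' \<and> length zs = l
     \<and> set (xs@ys@xs'@ys'@zs) \<subseteq> D \<longrightarrow> PC D R xs ys xs' ys' zs"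
      and a: "length as = k+j+k'+j'+l \<and> set as \<subseteq> D"
    show "PC D R (take k as) (take j (drop k as)) (take k' (drop (k+j) as)) (take j' (drop (k+j+k') as)) (drop (k+j+k'+j') as)"
      apply (rule h[rule_format])
      using a split5[of as k j k' j'] by auto
  qed
  finally show ?thesis .
qed

lemma bc3: "(\<forall>p\<in>{f j k l |j k l. True}. P p) = (\<forall>j k l. P (f j k l))" by blast
lemma bc5: "(\<forall>p\<in>{f j j' k k' l |j j' k k' l. True}. P p) = (\<forall>j j' k k' l. P (f j j' k k' l))" by blast
lemma ball_T: "(\<forall>p\<in>T_as_irr. P p) = (P ax_irr \<and> P ax_trans \<and> P ax_depth_ge3 \<and> P ax_depth_le3
     \<and> (\<forall>j k l. P (axA j k l)) \<and> (\<forall>j k l. P (axB j k l)) \<and> (\<forall>j j' k k' l. P (axC j j' k k' l)))"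
  unfolding T_as_irr_def ball_Un bc3 bc5 by simp

lemma holds_indep: "D \<noteq> {} \<Longrightarrow> (\<And>e. range e \<subseteq> D \<Longrightarrow> sat D R e p = P) \<Longrightarrow> holds D R p = P"
proof -
  assume D: "D \<noteq> {}" and h: "\<And>e. range e \<subseteq> D \<Longrightarrow> sat D R e p = P"
  obtain d where d: "d \<in> D" using D by auto
  have r: "range (\<lambda>_. d) \<subseteq> D" using d by auto
  show ?thesis unfolding holds_def using h h[OF r] r by blast
qed

definition SM :: "'a set \<Rightarrow> ('a \<Rightarrow> 'a \<Rightarrow> bool) \<Rightarrow> bool" where
  "SM D R \<longleftrightarrow> D \<noteq> {} \<and> (\<forall>a\<in>D. \<not> R a a) \<and> (\<forall>a\<in>D. \<forall>b\<in>D. \<forall>c\<in>D. R a b \<and> R b c \<longrightarrow> R a c)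
    \<and> (\<exists>a\<in>D. \<exists>b\<in>D. \<exists>c\<in>D. R a b \<and> R b c)
    \<and> \<not>(\<exists>a\<in>D. \<exists>b\<in>D. \<exists>c\<in>D. \<exists>d\<in>D. R a b \<and> R b c \<and> R c d)
    \<and> (\<forall>xs ys zs. set (xs@ys@zs) \<subseteq> D \<longrightarrow> PA D R xs ys zs)
    \<and> (\<forall>xs ys zs. set (xs@ys@zs) \<subseteq> D \<longrightarrow> PB D R xs ys zs)
    \<and> (\<forall>xs ys xs' ys' zs. set (xs@ys@xs'@ys'@zs) \<subseteq> D \<longrightarrow> PC D R xs ys xs' ys' zs)"

lemma is_model_SM: "is_model D R T_as_irr \<longleftrightarrow> SM D R"
proof (cases "D = {}")
  case True
  then show ?thesis by (simp add: is_model_def SM_def)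
next
  case D: False
  have i: "holds D R ax_irr = (\<forall>a\<in>D. \<not> R a a)"
    by (rule holds_indep[OF D]) (simp add: ax_irr_def All_def)
  have t: "holds D R ax_trans = (\<forall>a\<in>D. \<forall>b\<in>D. \<forall>c\<in>D. R a b \<and> R b c \<longrightarrow> R a c)"
    by (rule holds_indep[OF D]) (auto simp add: ax_trans_def All_def Alls_def Imp_def)
  have g: "holds D R ax_depth_ge3 = (\<exists>a\<in>D. \<exists>b\<in>D. \<exists>c\<in>D. R a b \<and> R b c)"
    by (rule holds_indep[OF D]) (auto simp add: ax_depth_ge3_def)
  have l: "holds D R ax_depth_le3 = (\<not>(\<exists>a\<in>D. \<exists>b\<in>D. \<exists>c\<in>D. \<exists>d\<in>D. R a b \<and> R b c \<and> R c d))"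
    by (rule holds_indep[OF D]) (auto simp add: ax_depth_le3_def)
  have a: "(\<forall>j k l. holds D R (axA j k l)) = (\<forall>xs ys zs. set (xs@ys@zs) \<subseteq> D \<longrightarrow> PA D R xs ys zs)"
    unfolding holds_axA[OF D] by (metis length_append)
  have b: "(\<forall>j k l. holds D R (axB j k l)) = (\<forall>xs ys zs. set (xs@ys@zs) \<subseteq> D \<longrightarrow> PB D R xs ys zs)"
    unfolding holds_axB[OF D] by (metis length_append)
  have c: "(\<forall>j j' k k' l. holds D R (axC j j' k k' l)) = (\<forall>xs ys xs' ys' zs. set (xs@ys@xs'@ys'@zs) \<subseteq> D \<longrightarrow> PC D R xs ys xs' ys' zs)"
    unfolding holds_axC[OF D] by (metis length_append)
  have "is_model D R T_as_irr = (holds D R ax_irr \<and> holds D R ax_trans \<and> holds D R ax_depth_ge3 \<and> holds D R ax_depth_le3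
     \<and> (\<forall>j k l. holds D R (axA j k l)) \<and> (\<forall>j k l. holds D R (axB j k l)) \<and> (\<forall>j j' k k' l. holds D R (axC j j' k k' l)))"
    unfolding is_model_def ball_T using D by simp
  then show ?thesis unfolding i t g l a b c SM_def using D by simp
qed




definition lv :: "'a set \<Rightarrow> ('a \<Rightarrow> 'a \<Rightarrow> bool) \<Rightarrow> 'a \<Rightarrow> nat" where
  "lv D R a = (if lev1 D R a then 1 else if lev2 D R a then 2 else 3)"

locale sm = fixes D :: "'a set" and R :: "'a \<Rightarrow> 'a \<Rightarrow> bool" assumes sm: "SM D R"
begin

lemma nonempty: "D \<noteq> {}" using sm unfolding SM_def by blast
lemma irr: "a \<in> D \<Longrightarrow> \<not> R a a" using sm unfolding SM_def by blast
lemma tr: "a \<in> D \<Longrightarrow> b \<in> D \<Longrightarrow> c \<in> D \<Longrightarrow> R a b \<Longrightarrow> R b c \<Longrightarrow> R a c" using sm unfolding SM_def by blast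
lemma nochain: "a \<in> D \<Longrightarrow> b \<in> D \<Longrightarrow> c \<in> D \<Longrightarrow> d \<in> D \<Longrightarrow> R a b \<Longrightarrow> R b c \<Longrightarrow> R c d \<Longrightarrow> False"
  using sm unfolding SM_def by blast

lemma extA: assumes "finite X" "finite Y" "finite Z" "X \<subseteq> D" "Y \<subseteq> D" "Z \<subseteq> D" "X \<inter> Y = {}"
  "\<forall>x\<in>X\<union>Y. lev2 D R x" "\<forall>z\<in>Z. lev1 D R z"
  shows "\<exists>c\<in>D. lev1 D R c \<and> c \<notin> Z \<and> (\<forall>x\<in>X. R c x) \<and> (\<forall>y\<in>Y. \<not> R c y)"
proof -
  obtain xs where xs: "set xs = X" "distinct xs" using finite_distinct_list[OF assms(1)] by blast
  obtain ys where ys: "set ys = Y" "distinct ys" using finite_distinct_list[OF assms(2)] by blast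
  obtain zs where zs: "set zs = Z" "distinct zs" using finite_distinct_list[OF assms(3)] by blast
  have "PA D R xs ys zs" using sm xs ys zs assms(4-6) unfolding SM_def by simp
  then show ?thesis unfolding PA_def using xs ys zs assms(7-9) by auto
qed

lemma extB: assumes "finite X" "finite Y" "finite Z" "X \<subseteq> D" "Y \<subseteq> D" "Z \<subseteq> D" "X \<inter> Y = {}"
  "\<forall>x\<in>X\<union>Y. lev2 D R x" "\<forall>z\<in>Z. lev3 D R z"
  shows "\<exists>c\<in>D. lev3 D R c \<and> c \<notin> Z \<and> (\<forall>x\<in>X. R x c) \<and> (\<forall>y\<in>Y. \<not> R y c)"
proof -
  obtain xs where xs: "set xs = X" "distinct xs" using finite_distinct_list[OF assms(1)] by blast
  obtain ys where ys: "set ys = Y" "distinct ys" using finite_distinct_list[OF assms(2)] by blast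
  obtain zs where zs: "set zs = Z" "distinct zs" using finite_distinct_list[OF assms(3)] by blast
  have "PB D R xs ys zs" using sm xs ys zs assms(4-6) unfolding SM_def by simp
  then show ?thesis unfolding PB_def using xs ys zs assms(7-9) by auto
qed

lemma extC: assumes "finite X" "finite Y" "finite X'" "finite Y'" "finite Z"
  "X \<subseteq> D" "Y \<subseteq> D" "X' \<subseteq> D" "Y' \<subseteq> D" "Z \<subseteq> D" "X \<inter> Y = {}" "X' \<inter> Y' = {}"
  "\<forall>x\<in>X\<union>Y. lev1 D R x" "\<forall>x\<in>X'\<union>Y'. lev3 D R x" "\<forall>z\<in>Z. lev2 D R z"
  shows "\<exists>c\<in>D. lev2 D R c \<and> c \<notin> Z \<and> (\<forall>x\<in>X. R x c) \<and> (\<forall>y\<in>Y. \<not> R y c)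
     \<and> (\<forall>x\<in>X'. R c x) \<and> (\<forall>y\<in>Y'. \<not> R c y)"
proof -
  obtain xs where xs: "set xs = X" "distinct xs" using finite_distinct_list[OF assms(1)] by blast
  obtain ys where ys: "set ys = Y" "distinct ys" using finite_distinct_list[OF assms(2)] by blast
  obtain xs' where xs': "set xs' = X'" "distinct xs'" using finite_distinct_list[OF assms(3)] by blast
  obtain ys' where ys': "set ys' = Y'" "distinct ys'" using finite_distinct_list[OF assms(4)] by blast
  obtain zs where zs: "set zs = Z" "distinct zs" using finite_distinct_list[OF assms(5)] by blast
  have "PC D R xs ys xs' ys' zs" using sm xs ys zs xs' ys' assms(6-10) unfolding SM_def by simp
  then show ?thesis unfolding PC_def using xs ys zs xs' ys' assms(11-15) by auto
qed

lemma l12: "lev2 D R a \<Longrightarrow> \<not> lev1 D R a"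
  unfolding lev2_def lev1_def cov_def by blast
lemma l13: "lev3 D R a \<Longrightarrow> \<not> lev1 D R a"
  unfolding lev3_def lev1_def cov_def by blast

lemma lev2_below: "lev2 D R a \<Longrightarrow> \<exists>m\<in>D. lev1 D R m \<and> R m a"
  unfolding lev2_def cov_def by blast
lemma lev3_below: "lev3 D R a \<Longrightarrow> \<exists>y\<in>D. lev2 D R y \<and> R y a"
  unfolding lev3_def cov_def by blast

lemma lev3_top: "a \<in> D \<Longrightarrow> b \<in> D \<Longrightarrow> lev3 D R a \<Longrightarrow> R a b \<Longrightarrow> False"
  using lev3_below lev2_below nochain by metis

lemma l23: assumes "a \<in> D" "lev2 D R a" shows "\<not> lev3 D R a"
proof
  assume "lev3 D R a"
  obtain c where "c \<in> D" "R a c"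
    using extB[of "{a}" "{}" "{}"] assms by auto
  then show False using lev3_top assms \<open>lev3 D R a\<close> by blast
qed

lemma cover: assumes "a \<in> D" shows "lev1 D R a \<or> lev2 D R a \<or> lev3 D R a"
proof (rule ccontr)
  assume n: "\<not> (lev1 D R a \<or> lev2 D R a \<or> lev3 D R a)"
  have "\<exists>m\<in>D. lev1 D R m \<and> R m a"
  proof -
    obtain b where b: "b \<in> D" "R b a" using n unfolding lev1_def by blast
    show ?thesis
    proof (cases "lev1 D R b")
      case True then show ?thesis using b by blast
    next
      case False
      then obtain b' where b': "b' \<in> D" "R b' b" unfolding lev1_def by blast
      have "lev1 D R b'"
      proof (rule ccontr)
        assume "\<not> lev1 D R b'"
        then obtain b'' where "b'' \<in> D" "R b'' b'" unfolding lev1_def by blast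
        then show False using nochain b b' assms by blast
      qed
      then show ?thesis using b b' tr assms by blast
    qed
  qed
  then obtain m where m: "m \<in> D" "lev1 D R m" "R m a" by blast
  have "\<not> cov D R a m" using n m unfolding lev2_def by blast
  then obtain c where c: "c \<in> D" "R m c" "R c a" using m unfolding cov_def by blast
  have "cov D R c m" using c m assms nochain unfolding cov_def by blast
  then have "lev2 D R c" using m c unfolding lev2_def by blast
  moreover have "cov D R a c" using c m assms nochain unfolding cov_def by blast
  ultimately have "lev3 D R a" using c unfolding lev3_def by blast
  then show False using n by blast
qed

lemma lv_cases: "lv D R a = 1 \<or> lv D R a = 2 \<or> lv D R a = 3" by (simp add: lv_def)
lemma lv1: "lv D R a = 1 \<longleftrightarrow> lev1 D R a" by (simp add: lv_def)
lemma lv2: "lv D R a = 2 \<longleftrightarrow> lev2 D R a" using l12 by (auto simp add: lv_def)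
lemma lv3: "a \<in> D \<Longrightarrow> lv D R a = 3 \<longleftrightarrow> lev3 D R a" using l13 l23 cover by (auto simp add: lv_def)

lemma R_lv: assumes "a \<in> D" "b \<in> D" "R a b"
  shows "(lv D R a = 1 \<and> lv D R b = 2) \<or> (lv D R a = 2 \<and> lv D R b = 3) \<or> (lv D R a = 1 \<and> lv D R b = 3)"
proof -
  have nb1: "\<not> lev1 D R b" using assms unfolding lev1_def by blast
  have na3: "\<not> lev3 D R a" using lev3_top assms by blast
  have "lev2 D R a \<Longrightarrow> lev2 D R b \<Longrightarrow> False"
  proof -
    assume a2: "lev2 D R a" and b2: "lev2 D R b"
    obtain m where m: "m \<in> D" "lev1 D R m" "R m a" using lev2_below a2 by blast
    have "cov D R b a" using assms m nochain unfolding cov_def by blast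
    then have "lev3 D R b" using a2 assms unfolding lev3_def by blast
    then show False using l23 assms b2 by blast
  qed
  then show ?thesis using nb1 na3 cover[OF assms(1)] cover[OF assms(2)] lv1 lv2 lv3 assms by metis
qed

lemma lv13: assumes "a \<in> D" "b \<in> D" "lv D R a = 1" "lv D R b = 3" shows "R a b"
proof -
  obtain c where "c \<in> D" "R a c" "R c b"
    using extC[of "{a}" "{}" "{b}" "{}" "{}"] assms lv1 lv3 by auto
  then show ?thesis using tr assms by blast
qed

lemma lev1_infinite: "infinite {a\<in>D. lev1 D R a}"
proof
  define S where "S = {a\<in>D. lev1 D R a}"
  assume f: "finite {a\<in>D. lev1 D R a}"
  have "S \<subseteq> D" "\<forall>z\<in>S. lev1 D R z" "finite S" using f unfolding S_def by auto
  then obtain c where "c \<in> D" "lev1 D R c" "c \<notin> S"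
    using extA[of "{}" "{}" S] by auto
  then show False unfolding S_def by blast
qed

lemma D_infinite: "infinite D"
  using lev1_infinite infinite_super by (metis (no_types, lifting) mem_Collect_eq subsetI)

end




definition good :: "'a set \<Rightarrow> ('a\<Rightarrow>'a\<Rightarrow>bool) \<Rightarrow> 'b set \<Rightarrow> ('b\<Rightarrow>'b\<Rightarrow>bool) \<Rightarrow> ('a\<times>'b) set \<Rightarrow> bool" where
 "good D1 R1 D2 R2 P \<longleftrightarrow> finite P \<and> (\<forall>a b. (a,b)\<in>P \<longrightarrow> a \<in> D1 \<and> b \<in> D2 \<and> lv D1 R1 a = lv D2 R2 b)
    \<and> (\<forall>a b a' b'. (a,b)\<in>P \<longrightarrow> (a',b')\<in>P \<longrightarrow> (a = a' \<longleftrightarrow> b = b') \<and> (R1 a a' \<longleftrightarrow> R2 b b'))"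

lemma good_sub: "good D1 R1 D2 R2 P \<Longrightarrow> Q \<subseteq> P \<Longrightarrow> good D1 R1 D2 R2 Q"
proof -
  assume g: "good D1 R1 D2 R2 P" and q: "Q \<subseteq> P"
  have f: "finite Q" using g q finite_subset unfolding good_def by blast
  have h1: "\<forall>a b. (a,b) \<in> Q \<longrightarrow> a \<in> D1 \<and> b \<in> D2 \<and> lv D1 R1 a = lv D2 R2 b" using g q unfolding good_def by blast
  have h2: "\<forall>a b a' b'. (a,b) \<in> Q \<longrightarrow> (a',b') \<in> Q \<longrightarrow> (a = a' \<longleftrightarrow> b = b') \<and> (R1 a a' \<longleftrightarrow> R2 b b')"
    using g q unfolding good_def subset_iff by blast
  show ?thesis unfolding good_def using f h1 h2 by blast
qed

lemma good_swap: "good D2 R2 D1 R1 (converse P) \<longleftrightarrow> good D1 R1 D2 R2 P"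
  unfolding good_def converse_iff finite_converse by (intro conj_cong refl iffI allI impI; metis)

lemma good_insert:
  assumes "good D1 R1 D2 R2 P" "a \<in> D1" "c \<in> D2" "lv D1 R1 a = lv D2 R2 c" "\<not> R1 a a" "\<not> R2 c c"
    "\<And>a' b'. (a',b') \<in> P \<Longrightarrow> (a = a' \<longleftrightarrow> c = b') \<and> (R1 a a' \<longleftrightarrow> R2 c b') \<and> (R1 a' a \<longleftrightarrow> R2 b' c)"
  shows "good D1 R1 D2 R2 (insert (a,c) P)"
  using assms unfolding good_def by auto

lemma good_pair: "good D1 R1 D2 R2 P \<Longrightarrow> (a,b) \<in> P \<Longrightarrow> (a',b') \<in> P \<Longrightarrow> (a = a' \<longleftrightarrow> b = b') \<and> (R1 a a' \<longleftrightarrow> R2 b b')"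
  unfolding good_def by blast
lemma good_lv: "good D1 R1 D2 R2 P \<Longrightarrow> (a,b) \<in> P \<Longrightarrow> lv D1 R1 a = lv D2 R2 b"
  unfolding good_def by blast
lemma good_D: "good D1 R1 D2 R2 P \<Longrightarrow> (a,b) \<in> P \<Longrightarrow> a \<in> D1 \<and> b \<in> D2"
  unfolding good_def by blast
lemma good_fin: "good D1 R1 D2 R2 P \<Longrightarrow> finite P"
  unfolding good_def by blast

lemma forth1:
  assumes s1: "SM D1 R1" and s2: "SM D2 R2" and g: "good D1 R1 D2 R2 P" and a: "a \<in> D1"
    and na: "a \<notin> fst ` P" and la: "lv D1 R1 a = 1"
  shows "\<exists>c\<in>D2. good D1 R1 D2 R2 (insert (a,c) P)"
proof -
  interpret M1: sm D1 R1 by (rule sm.intro) (rule s1)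
  interpret M2: sm D2 R2 by (rule sm.intro) (rule s2)
  define X where "X = {b. \<exists>a'. (a',b) \<in> P \<and> lv D1 R1 a' = 2 \<and> R1 a a'}"
  define Y where "Y = {b. \<exists>a'. (a',b) \<in> P \<and> lv D1 R1 a' = 2 \<and> \<not> R1 a a'}"
  define Z where "Z = {b. \<exists>a'. (a',b) \<in> P \<and> lv D1 R1 a' = 1}"
  have fP: "finite (snd ` P)" using good_fin[OF g] by simp
  have fin: "finite X" "finite Y" "finite Z"
    unfolding X_def Y_def Z_def by (rule finite_subset[OF _ fP], force)+
  have sub: "X \<subseteq> D2" "Y \<subseteq> D2" "Z \<subseteq> D2" unfolding X_def Y_def Z_def using good_D[OF g] by blast+
  have disj: "X \<inter> Y = {}"
  proof (rule ccontr)
    assume "X \<inter> Y \<noteq> {}"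
    then obtain b a1 a2 where "(a1,b) \<in> P" "R1 a a1" "(a2,b) \<in> P" "\<not> R1 a a2" unfolding X_def Y_def by blast
    then show False using good_pair[OF g] by blast
  qed
  have lXY: "\<forall>x\<in>X\<union>Y. lev2 D2 R2 x" unfolding X_def Y_def using good_lv[OF g] M2.lv2 by auto
  have lZ: "\<forall>x\<in>Z. lev1 D2 R2 x" unfolding Z_def using good_lv[OF g] M2.lv1 by auto
  obtain c where c: "c \<in> D2" "lev1 D2 R2 c" "c \<notin> Z" "\<forall>x\<in>X. R2 c x" "\<forall>y\<in>Y. \<not> R2 c y"
    using M2.extA[OF fin sub disj lXY lZ] by blast
  have lc: "lv D2 R2 c = 1" using c M2.lv1 by simp
  have "good D1 R1 D2 R2 (insert (a,c) P)"
  proof (rule good_insert[OF g a c(1)])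
    show "lv D1 R1 a = lv D2 R2 c" using la lc by simp
    show "\<not> R1 a a" using M1.irr a by blast
    show "\<not> R2 c c" using M2.irr c by blast
    fix a' b' assume p: "(a',b') \<in> P"
    have a'D: "a' \<in> D1" and b'D: "b' \<in> D2" and l': "lv D1 R1 a' = lv D2 R2 b'" using good_D[OF g p] good_lv[OF g p] by auto
    have "a \<noteq> a'" using na p by force
    moreover have "c \<noteq> b'"
    proof
      assume "c = b'"
      then have "lv D1 R1 a' = 1" using l' lc by simp
      then have "b' \<in> Z" using p unfolding Z_def by blast
      then show False using c(3) \<open>c = b'\<close> by blast
    qed
    moreover have "R1 a a' \<longleftrightarrow> R2 c b'"
    proof -
      consider "lv D1 R1 a' = 1" | "lv D1 R1 a' = 2" | "lv D1 R1 a' = 3" using M1.lv_cases by blast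
      then show ?thesis
      proof cases
        case 1
        then show ?thesis using M1.R_lv[OF a a'D] M2.R_lv[OF c(1) b'D] l' by auto
      next
        case 2
        show ?thesis
        proof (cases "R1 a a'")
          case True
          then have "b' \<in> X" using p 2 unfolding X_def by blast
          then show ?thesis using c True by blast
        next
          case False
          then have "b' \<in> Y" using p 2 unfolding Y_def by blast
          then show ?thesis using c False by blast
        qed
      next
        case 3
        then show ?thesis using M1.lv13[OF a a'D la] M2.lv13[OF c(1) b'D lc] l' by auto
      qed
    qed
    moreover have "\<not> R1 a' a" using M1.R_lv[OF a'D a] la by auto
    moreover have "\<not> R2 b' c" using M2.R_lv[OF b'D c(1)] lc by auto
    ultimately show "(a = a' \<longleftrightarrow> c = b') \<and> (R1 a a' \<longleftrightarrow> R2 c b') \<and> (R1 a' a \<longleftrightarrow> R2 b' c)" by blast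
  qed
  then show ?thesis using c(1) by blast
qed

lemma forth3:
  assumes s1: "SM D1 R1" and s2: "SM D2 R2" and g: "good D1 R1 D2 R2 P" and a: "a \<in> D1"
    and na: "a \<notin> fst ` P" and la: "lv D1 R1 a = 3"
  shows "\<exists>c\<in>D2. good D1 R1 D2 R2 (insert (a,c) P)"
proof -
  interpret M1: sm D1 R1 by (rule sm.intro) (rule s1)
  interpret M2: sm D2 R2 by (rule sm.intro) (rule s2)
  define X where "X = {b. \<exists>a'. (a',b) \<in> P \<and> lv D1 R1 a' = 2 \<and> R1 a' a}"
  define Y where "Y = {b. \<exists>a'. (a',b) \<in> P \<and> lv D1 R1 a' = 2 \<and> \<not> R1 a' a}"
  define Z where "Z = {b. \<exists>a'. (a',b) \<in> P \<and> lv D1 R1 a' = 3}"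
  have fP: "finite (snd ` P)" using good_fin[OF g] by simp
  have fin: "finite X" "finite Y" "finite Z"
    unfolding X_def Y_def Z_def by (rule finite_subset[OF _ fP], force)+
  have sub: "X \<subseteq> D2" "Y \<subseteq> D2" "Z \<subseteq> D2" unfolding X_def Y_def Z_def using good_D[OF g] by blast+
  have disj: "X \<inter> Y = {}"
  proof (rule ccontr)
    assume "X \<inter> Y \<noteq> {}"
    then obtain b a1 a2 where "(a1,b) \<in> P" "R1 a1 a" "(a2,b) \<in> P" "\<not> R1 a2 a" unfolding X_def Y_def by blast
    then show False using good_pair[OF g] by blast
  qed
  have lXY: "\<forall>x\<in>X\<union>Y. lev2 D2 R2 x" unfolding X_def Y_def using good_lv[OF g] M2.lv2 by auto
  have lZ: "\<forall>x\<in>Z. lev3 D2 R2 x" unfolding Z_def using good_lv[OF g] good_D[OF g] M2.lv3 by auto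
  obtain c where c: "c \<in> D2" "lev3 D2 R2 c" "c \<notin> Z" "\<forall>x\<in>X. R2 x c" "\<forall>y\<in>Y. \<not> R2 y c"
    using M2.extB[OF fin sub disj lXY lZ] by blast
  have lc: "lv D2 R2 c = 3" using c M2.lv3 by simp
  have "good D1 R1 D2 R2 (insert (a,c) P)"
  proof (rule good_insert[OF g a c(1)])
    show "lv D1 R1 a = lv D2 R2 c" using la lc by simp
    show "\<not> R1 a a" using M1.irr a by blast
    show "\<not> R2 c c" using M2.irr c by blast
    fix a' b' assume p: "(a',b') \<in> P"
    have a'D: "a' \<in> D1" and b'D: "b' \<in> D2" and l': "lv D1 R1 a' = lv D2 R2 b'" using good_D[OF g p] good_lv[OF g p] by auto
    have "a \<noteq> a'" using na p by force
    moreover have "c \<noteq> b'"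
    proof
      assume "c = b'"
      then have "lv D1 R1 a' = 3" using l' lc by simp
      then have "b' \<in> Z" using p unfolding Z_def by blast
      then show False using c(3) \<open>c = b'\<close> by blast
    qed
    moreover have "R1 a' a \<longleftrightarrow> R2 b' c"
    proof -
      consider "lv D1 R1 a' = 1" | "lv D1 R1 a' = 2" | "lv D1 R1 a' = 3" using M1.lv_cases by blast
      then show ?thesis
      proof cases
        case 1
        then show ?thesis using M1.lv13[OF a'D a _ la] M2.lv13[OF b'D c(1) _ lc] l' by auto
      next
        case 2
        show ?thesis
        proof (cases "R1 a' a")
          case True
          then have "b' \<in> X" using p 2 unfolding X_def by blast
          then show ?thesis using c True by blast
        next
          case False
          then have "b' \<in> Y" using p 2 unfolding Y_def by blast
          then show ?thesis using c False by blast
        qed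
      next
        case 3
        then show ?thesis using M1.R_lv[OF a'D a] M2.R_lv[OF b'D c(1)] l' by auto
      qed
    qed
    moreover have "\<not> R1 a a'" using M1.R_lv[OF a a'D] la by auto
    moreover have "\<not> R2 c b'" using M2.R_lv[OF c(1) b'D] lc by auto
    ultimately show "(a = a' \<longleftrightarrow> c = b') \<and> (R1 a a' \<longleftrightarrow> R2 c b') \<and> (R1 a' a \<longleftrightarrow> R2 b' c)" by blast
  qed
  then show ?thesis using c(1) by blast
qed

lemma forth2:
  assumes s1: "SM D1 R1" and s2: "SM D2 R2" and g: "good D1 R1 D2 R2 P" and a: "a \<in> D1"
    and na: "a \<notin> fst ` P" and la: "lv D1 R1 a = 2"
  shows "\<exists>c\<in>D2. good D1 R1 D2 R2 (insert (a,c) P)"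
proof -
  interpret M1: sm D1 R1 by (rule sm.intro) (rule s1)
  interpret M2: sm D2 R2 by (rule sm.intro) (rule s2)
  define X where "X = {b. \<exists>a'. (a',b) \<in> P \<and> lv D1 R1 a' = 1 \<and> R1 a' a}"
  define Y where "Y = {b. \<exists>a'. (a',b) \<in> P \<and> lv D1 R1 a' = 1 \<and> \<not> R1 a' a}"
  define X' where "X' = {b. \<exists>a'. (a',b) \<in> P \<and> lv D1 R1 a' = 3 \<and> R1 a a'}"
  define Y' where "Y' = {b. \<exists>a'. (a',b) \<in> P \<and> lv D1 R1 a' = 3 \<and> \<not> R1 a a'}"
  define Z where "Z = {b. \<exists>a'. (a',b) \<in> P \<and> lv D1 R1 a' = 2}"
  have fP: "finite (snd ` P)" using good_fin[OF g] by simp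
  have fin: "finite X" "finite Y" "finite X'" "finite Y'" "finite Z"
    unfolding X_def Y_def X'_def Y'_def Z_def by (rule finite_subset[OF _ fP], force)+
  have sub: "X \<subseteq> D2" "Y \<subseteq> D2" "X' \<subseteq> D2" "Y' \<subseteq> D2" "Z \<subseteq> D2"
    unfolding X_def Y_def X'_def Y'_def Z_def using good_D[OF g] by blast+
  have disj: "X \<inter> Y = {}"
  proof (rule ccontr)
    assume "X \<inter> Y \<noteq> {}"
    then obtain b a1 a2 where "(a1,b) \<in> P" "R1 a1 a" "(a2,b) \<in> P" "\<not> R1 a2 a" unfolding X_def Y_def by blast
    then show False using good_pair[OF g] by blast
  qed
  have disj': "X' \<inter> Y' = {}"
  proof (rule ccontr)
    assume "X' \<inter> Y' \<noteq> {}"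
    then obtain b a1 a2 where "(a1,b) \<in> P" "R1 a a1" "(a2,b) \<in> P" "\<not> R1 a a2" unfolding X'_def Y'_def by blast
    then show False using good_pair[OF g] by blast
  qed
  have lXY: "\<forall>x\<in>X\<union>Y. lev1 D2 R2 x" unfolding X_def Y_def using good_lv[OF g] M2.lv1 by auto
  have lXY': "\<forall>x\<in>X'\<union>Y'. lev3 D2 R2 x" unfolding X'_def Y'_def using good_lv[OF g] good_D[OF g] M2.lv3 by auto
  have lZ: "\<forall>x\<in>Z. lev2 D2 R2 x" unfolding Z_def using good_lv[OF g] M2.lv2 by auto
  obtain c where c: "c \<in> D2" "lev2 D2 R2 c" "c \<notin> Z" "\<forall>x\<in>X. R2 x c" "\<forall>y\<in>Y. \<not> R2 y c"
      "\<forall>x\<in>X'. R2 c x" "\<forall>y\<in>Y'. \<not> R2 c y"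
    using M2.extC[OF fin sub disj disj' lXY lXY' lZ] by blast
  have lc: "lv D2 R2 c = 2" using c M2.lv2 by simp
  have "good D1 R1 D2 R2 (insert (a,c) P)"
  proof (rule good_insert[OF g a c(1)])
    show "lv D1 R1 a = lv D2 R2 c" using la lc by simp
    show "\<not> R1 a a" using M1.irr a by blast
    show "\<not> R2 c c" using M2.irr c by blast
    fix a' b' assume p: "(a',b') \<in> P"
    have a'D: "a' \<in> D1" and b'D: "b' \<in> D2" and l': "lv D1 R1 a' = lv D2 R2 b'" using good_D[OF g p] good_lv[OF g p] by auto
    have "a \<noteq> a'" using na p by force
    moreover have "c \<noteq> b'"
    proof
      assume "c = b'"
      then have "lv D1 R1 a' = 2" using l' lc by simp
      then have "b' \<in> Z" using p unfolding Z_def by blast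
      then show False using c(3) \<open>c = b'\<close> by blast
    qed
    moreover have "(R1 a' a \<longleftrightarrow> R2 b' c) \<and> (R1 a a' \<longleftrightarrow> R2 c b')"
    proof -
      consider "lv D1 R1 a' = 1" | "lv D1 R1 a' = 2" | "lv D1 R1 a' = 3" using M1.lv_cases by blast
      then show ?thesis
      proof cases
        case 1
        have "R1 a' a \<longleftrightarrow> R2 b' c"
        proof (cases "R1 a' a")
          case True
          then have "b' \<in> X" using p 1 unfolding X_def by blast
          then show ?thesis using c True by blast
        next
          case False
          then have "b' \<in> Y" using p 1 unfolding Y_def by blast
          then show ?thesis using c False by blast
        qed
        moreover have "\<not> R1 a a'" using M1.R_lv[OF a a'D] 1 by auto
        moreover have "\<not> R2 c b'" using M2.R_lv[OF c(1) b'D] 1 l' by auto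
        ultimately show ?thesis by blast
      next
        case 2
        then show ?thesis using M1.R_lv[OF a a'D] M1.R_lv[OF a'D a] M2.R_lv[OF c(1) b'D] M2.R_lv[OF b'D c(1)] l' la lc by auto
      next
        case 3
        have "R1 a a' \<longleftrightarrow> R2 c b'"
        proof (cases "R1 a a'")
          case True
          then have "b' \<in> X'" using p 3 unfolding X'_def by blast
          then show ?thesis using c True by blast
        next
          case False
          then have "b' \<in> Y'" using p 3 unfolding Y'_def by blast
          then show ?thesis using c False by blast
        qed
        moreover have "\<not> R1 a' a" using M1.R_lv[OF a'D a] 3 by auto
        moreover have "\<not> R2 b' c" using M2.R_lv[OF b'D c(1)] 3 l' by auto
        ultimately show ?thesis by blast
      qed
    qed
    ultimately show "(a = a' \<longleftrightarrow> c = b') \<and> (R1 a a' \<longleftrightarrow> R2 c b') \<and> (R1 a' a \<longleftrightarrow> R2 b' c)" by blast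
  qed
  then show ?thesis using c(1) by blast
qed

lemma forth:
  assumes s1: "SM D1 R1" and s2: "SM D2 R2" and g: "good D1 R1 D2 R2 P" and a: "a \<in> D1"
  shows "\<exists>c\<in>D2. good D1 R1 D2 R2 (insert (a,c) P)"
proof (cases "a \<in> fst ` P")
  case True
  then obtain c where "(a,c) \<in> P" by force
  then show ?thesis using g good_D[OF g] by (metis insert_absorb)
next
  case False
  interpret M1: sm D1 R1 by (rule sm.intro) (rule s1)
  consider "lv D1 R1 a = 1" | "lv D1 R1 a = 2" | "lv D1 R1 a = 3" using M1.lv_cases by blast
  then show ?thesis using forth1[OF assms False] forth2[OF assms False] forth3[OF assms False] by cases
qed

lemma backstep:
  assumes s1: "SM D1 R1" and s2: "SM D2 R2" and g: "good D1 R1 D2 R2 P" and b: "b \<in> D2"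
  shows "\<exists>c\<in>D1. good D1 R1 D2 R2 (insert (c,b) P)"
proof -
  have "good D2 R2 D1 R1 (converse P)" using g good_swap by blast
  then obtain c where "c \<in> D1" "good D2 R2 D1 R1 (insert (b,c) (converse P))" using forth[OF s2 s1 _ b] by blast
  moreover have "insert (b,c) (converse P) = converse (insert (c,b) P)" by auto
  ultimately show ?thesis using good_swap by metis
qed




lemma good_empty: "good D1 R1 D2 R2 {}" unfolding good_def by simp

lemma img_upd: "(\<lambda>v. ((e1(x:=a)) v, (e2(x:=c)) v)) ` insert x (V - {x}) = insert (a,c) ((\<lambda>v. (e1 v, e2 v)) ` (V - {x}))"
  by auto

lemma ef:
  assumes s1: "SM D1 R1" and s2: "SM D2 R2"
  shows "finite V \<Longrightarrow> fv \<phi> \<subseteq> V \<Longrightarrow> range e1 \<subseteq> D1 \<Longrightarrow> range e2 \<subseteq> D2 \<Longrightarrow>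
    good D1 R1 D2 R2 ((\<lambda>v. (e1 v, e2 v)) ` V) \<Longrightarrow> sat D1 R1 e1 \<phi> = sat D2 R2 e2 \<phi>"
proof (induction \<phi> arbitrary: V e1 e2)
  case TT
  then show ?case by simp
next
  case (Eq x y)
  have "x \<in> V" "y \<in> V" using Eq.prems(2) by auto
  then have m: "(e1 x, e2 x) \<in> (\<lambda>v. (e1 v, e2 v)) ` V" "(e1 y, e2 y) \<in> (\<lambda>v. (e1 v, e2 v)) ` V"
    by (simp_all add: rev_image_eqI)
  show ?case unfolding sat.simps using good_pair[OF Eq.prems(5) m] by blast
next
  case (Lt x y)
  have "x \<in> V" "y \<in> V" using Lt.prems(2) by auto
  then have m: "(e1 x, e2 x) \<in> (\<lambda>v. (e1 v, e2 v)) ` V" "(e1 y, e2 y) \<in> (\<lambda>v. (e1 v, e2 v)) ` V"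
    by (simp_all add: rev_image_eqI)
  show ?case unfolding sat.simps using good_pair[OF Lt.prems(5) m] by blast
next
  case (Neg p)
  have "sat D1 R1 e1 p = sat D2 R2 e2 p" by (rule Neg.IH[OF Neg.prems(1) _ Neg.prems(3-5)]) (use Neg.prems(2) in simp)
  then show ?case by simp
next
  case (Conj p q)
  have "sat D1 R1 e1 p = sat D2 R2 e2 p" by (rule Conj.IH(1)[OF Conj.prems(1) _ Conj.prems(3-5)]) (use Conj.prems(2) in simp)
  moreover have "sat D1 R1 e1 q = sat D2 R2 e2 q" by (rule Conj.IH(2)[OF Conj.prems(1) _ Conj.prems(3-5)]) (use Conj.prems(2) in simp)
  ultimately show ?case unfolding sat.simps by (rule arg_cong2[where f=conj])
next
  case (Ex x p)
  let ?S = "(\<lambda>v. (e1 v, e2 v)) ` (V - {x})"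
  have gS: "good D1 R1 D2 R2 ?S" by (rule good_sub[OF Ex.prems(5)], rule image_mono, rule Diff_subset)
  have fV: "finite (insert x (V - {x}))" using Ex.prems(1) by simp
  have fvp: "fv p \<subseteq> insert x (V - {x})" using Ex.prems(2) by (simp add: subset_iff) blast
  show ?case
  proof
    assume "sat D1 R1 e1 (fm.Ex x p)"
    then obtain a where a: "a \<in> D1" "sat D1 R1 (e1(x:=a)) p" by auto
    obtain c where c: "c \<in> D2" "good D1 R1 D2 R2 (insert (a,c) ?S)" using forth[OF s1 s2 gS a(1)] by blast
    have "sat D2 R2 (e2(x:=c)) p"
    proof -
      have r: "range (e1(x:=a)) \<subseteq> D1" "range (e2(x:=c)) \<subseteq> D2" using Ex.prems(3,4) a c by auto
      have gg: "good D1 R1 D2 R2 ((\<lambda>v. ((e1(x:=a)) v, (e2(x:=c)) v)) ` insert x (V - {x}))"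
        unfolding img_upd using a c by blast
      show ?thesis using Ex.IH[OF fV fvp r gg] a c by blast
    qed
    then show "sat D2 R2 e2 (fm.Ex x p)" using c by auto
  next
    assume "sat D2 R2 e2 (fm.Ex x p)"
    then obtain c where c: "c \<in> D2" "sat D2 R2 (e2(x:=c)) p" by auto
    obtain a where a: "a \<in> D1" "good D1 R1 D2 R2 (insert (a,c) ?S)" using backstep[OF s1 s2 gS c(1)] by blast
    have "sat D1 R1 (e1(x:=a)) p"
    proof -
      have r: "range (e1(x:=a)) \<subseteq> D1" "range (e2(x:=c)) \<subseteq> D2" using Ex.prems(3,4) a c by auto
      have gg: "good D1 R1 D2 R2 ((\<lambda>v. ((e1(x:=a)) v, (e2(x:=c)) v)) ` insert x (V - {x}))"
        unfolding img_upd using a c by blast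
      show ?thesis using Ex.IH[OF fV fvp r gg] a c by blast
    qed
    then show "sat D1 R1 e1 (fm.Ex x p)" using a by auto
  qed
qed

lemma complete:
  assumes s1: "SM D1 R1" and s2: "SM D2 R2" and st: "sentence \<phi>"
  shows "holds D1 R1 \<phi> \<longleftrightarrow> holds D2 R2 \<phi>"
proof -
  interpret M1: sm D1 R1 by (rule sm.intro) (rule s1)
  interpret M2: sm D2 R2 by (rule sm.intro) (rule s2)
  obtain d1 where d1: "d1 \<in> D1" using M1.nonempty by auto
  obtain d2 where d2: "d2 \<in> D2" using M2.nonempty by auto
  have fv: "fv \<phi> \<subseteq> {}" using st unfolding sentence_def by simp
  have E: "sat D1 R1 e1 \<phi> = sat D2 R2 e2 \<phi>" if "range e1 \<subseteq> D1" "range e2 \<subseteq> D2" for e1 e2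
    using ef[OF s1 s2 _ fv that] good_empty[of D1 R1 D2 R2] by simp
  have r1: "range (\<lambda>_. d1) \<subseteq> D1" and r2: "range (\<lambda>_. d2) \<subseteq> D2" using d1 d2 by auto
  have "holds D1 R1 \<phi> = sat D2 R2 (\<lambda>_. d2) \<phi>" by (rule holds_indep[OF M1.nonempty]) (rule E[OF _ r2])
  moreover have "holds D2 R2 \<phi> = sat D1 R1 (\<lambda>_. d1) \<phi>" by (rule holds_indep[OF M2.nonempty]) (rule E[OF r1, symmetric])
  ultimately show ?thesis using E[OF r1 r2] by simp
qed

lemma step2:
  assumes s1: "SM D1 R1" and s2: "SM D2 R2" and g: "good D1 R1 D2 R2 P" and a: "a \<in> D1" and b: "b \<in> D2"
  shows "\<exists>Q. good D1 R1 D2 R2 Q \<and> P \<subseteq> Q \<and> a \<in> fst ` Q \<and> b \<in> snd ` Q"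
proof -
  obtain c where c: "c \<in> D2" "good D1 R1 D2 R2 (insert (a,c) P)" using forth[OF s1 s2 g a] by blast
  obtain d where d: "d \<in> D1" "good D1 R1 D2 R2 (insert (d,b) (insert (a,c) P))" using backstep[OF s1 s2 c(2) b] by blast
  show ?thesis
    by (rule exI[of _ "insert (d,b) (insert (a,c) P)"]) (use d in force)
qed

primrec chainP :: "'a set \<Rightarrow> ('a\<Rightarrow>'a\<Rightarrow>bool) \<Rightarrow> 'b set \<Rightarrow> ('b\<Rightarrow>'b\<Rightarrow>bool) \<Rightarrow> nat \<Rightarrow> ('a\<times>'b) set" where
  "chainP D1 R1 D2 R2 0 = {}"
| "chainP D1 R1 D2 R2 (Suc n) = (SOME Q. good D1 R1 D2 R2 Q \<and> chainP D1 R1 D2 R2 n \<subseteq> Q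
      \<and> from_nat_into D1 n \<in> fst ` Q \<and> from_nat_into D2 n \<in> snd ` Q)"

lemma chainP_props:
  assumes s1: "SM D1 R1" and s2: "SM D2 R2"
  shows "good D1 R1 D2 R2 (chainP D1 R1 D2 R2 n) \<and>
    (n > 0 \<longrightarrow> chainP D1 R1 D2 R2 (n - 1) \<subseteq> chainP D1 R1 D2 R2 n
       \<and> from_nat_into D1 (n - 1) \<in> fst ` chainP D1 R1 D2 R2 n \<and> from_nat_into D2 (n - 1) \<in> snd ` chainP D1 R1 D2 R2 n)"
proof (induction n)
  case 0
  then show ?case by (simp add: good_empty)
next
  case (Suc n)
  interpret M1: sm D1 R1 by (rule sm.intro) (rule s1)
  interpret M2: sm D2 R2 by (rule sm.intro) (rule s2)
  have g: "good D1 R1 D2 R2 (chainP D1 R1 D2 R2 n)" using Suc.IH by blast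
  have "\<exists>Q. good D1 R1 D2 R2 Q \<and> chainP D1 R1 D2 R2 n \<subseteq> Q
      \<and> from_nat_into D1 n \<in> fst ` Q \<and> from_nat_into D2 n \<in> snd ` Q"
    using step2[OF s1 s2 g from_nat_into[OF M1.nonempty] from_nat_into[OF M2.nonempty]] .
  from someI_ex[OF this] show ?case by simp
qed

lemma categorical:
  assumes s1: "SM D1 R1" and s2: "SM D2 R2" and c1: "countable D1" and c2: "countable D2"
  shows "isomorphic D1 R1 D2 R2"
proof -
  interpret M1: sm D1 R1 by (rule sm.intro) (rule s1)
  interpret M2: sm D2 R2 by (rule sm.intro) (rule s2)
  let ?C = "chainP D1 R1 D2 R2"
  define U where "U = (\<Union>n. ?C n)"
  have gC: "\<And>n. good D1 R1 D2 R2 (?C n)" using chainP_props[OF s1 s2] by blast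
  have sucC: "\<And>n. ?C n \<subseteq> ?C (Suc n)" using chainP_props[OF s1 s2, of "Suc _"] by simp
  have monoC: "\<And>m n. m \<le> n \<Longrightarrow> ?C m \<subseteq> ?C n" using lift_Suc_mono_le[of ?C, OF sucC] by blast
  have dom: "\<And>n. from_nat_into D1 n \<in> fst ` ?C (Suc n)" using chainP_props[OF s1 s2, of "Suc _"] by simp
  have rng: "\<And>n. from_nat_into D2 n \<in> snd ` ?C (Suc n)" using chainP_props[OF s1 s2, of "Suc _"] by simp
  have UD: "\<And>a b. (a,b) \<in> U \<Longrightarrow> a \<in> D1 \<and> b \<in> D2" unfolding U_def using good_D[OF gC] by blast
  have Upair: "(a = a' \<longleftrightarrow> b = b') \<and> (R1 a a' \<longleftrightarrow> R2 b b')" if ab: "(a,b) \<in> U" "(a',b') \<in> U" for a b a' b'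
  proof -
    obtain m n where "(a,b) \<in> ?C m" "(a',b') \<in> ?C n" using ab unfolding U_def by blast
    then have "(a,b) \<in> ?C (max m n)" "(a',b') \<in> ?C (max m n)" using monoC[of m "max m n"] monoC[of n "max m n"] by auto
    then show ?thesis using good_pair[OF gC] by blast
  qed
  have allD1: "\<exists>b. (a,b) \<in> U" if aD: "a \<in> D1" for a
  proof -
    obtain n where "a = from_nat_into D1 n" using aD range_from_nat_into[OF M1.nonempty c1] by (metis rangeE)
    then have "a \<in> fst ` ?C (Suc n)" using dom[of n] by simp
    then obtain b where "(a,b) \<in> ?C (Suc n)" by force
    then show ?thesis unfolding U_def by blast
  qed
  have allD2: "\<exists>a. (a,b) \<in> U" if bD: "b \<in> D2" for b
  proof -
    obtain n where "b = from_nat_into D2 n" using bD range_from_nat_into[OF M2.nonempty c2] by (metis rangeE)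
    then have "b \<in> snd ` ?C (Suc n)" using rng[of n] by simp
    then obtain a where "(a,b) \<in> ?C (Suc n)" by force
    then show ?thesis unfolding U_def by blast
  qed
  define f where "f a = (SOME b. (a,b) \<in> U)" for a
  have fU: "(a, f a) \<in> U" if "a \<in> D1" for a using someI_ex[OF allD1[OF that]] unfolding f_def .
  have "bij_betw f D1 D2"
    unfolding bij_betw_def
  proof
    show "inj_on f D1"
    proof (rule inj_onI)
      fix a a' assume "a \<in> D1" "a' \<in> D1" "f a = f a'"
      then show "a = a'" using Upair[OF fU fU] by metis
    qed
    show "f ` D1 = D2"
    proof
      show "f ` D1 \<subseteq> D2" using fU UD by blast
      show "D2 \<subseteq> f ` D1"
      proof
        fix b assume b: "b \<in> D2"
        then obtain a where ab: "(a,b) \<in> U" using allD2 by blast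
        then have a: "a \<in> D1" using UD by blast
        have "f a = b" using Upair[OF fU[OF a] ab] by blast
        then show "b \<in> f ` D1" using a by blast
      qed
    qed
  qed
  moreover have "\<forall>x\<in>D1. \<forall>y\<in>D1. R1 x y \<longleftrightarrow> R2 (f x) (f y)" using Upair[OF fU fU] by blast
  ultimately show ?thesis unfolding isomorphic_def by blast
qed




definition fR :: "nat \<Rightarrow> nat \<Rightarrow> bool" where
  "fR i j = (if i < j then 2*i \<in> set_decode j else 2*j \<in> set_decode i)"
definition gR :: "nat \<Rightarrow> nat \<Rightarrow> bool" where
  "gR j k = (if k < j then 2*k+1 \<in> set_decode j else 2*j+1 \<in> set_decode k)"
definition RR :: "nat \<Rightarrow> nat \<Rightarrow> bool" where
  "RR a b = ((a mod 3 = 0 \<and> b mod 3 = 1 \<and> fR (a div 3) (b div 3)) \<or> (a mod 3 = 1 \<and> b mod 3 = 2 \<and> gR (a div 3) (b div 3))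
     \<or> (a mod 3 = 0 \<and> b mod 3 = 2))"

lemma set_encode_ge: "finite X \<Longrightarrow> n \<in> X \<Longrightarrow> 2^n \<le> set_encode X"
proof -
  assume f: "finite X" and n: "n \<in> X"
  have "X = insert n (X - {n})" using n by auto
  then have "set_encode X = 2^n + set_encode (X - {n})" using f by (metis set_encode_insert finite_Diff Diff_iff singletonI)
  then show ?thesis by simp
qed

lemma big_gt: "finite X \<Longrightarrow> N < set_encode (insert (2*N) X)"
proof -
  assume "finite X"
  then have "2^(2*N) \<le> set_encode (insert (2*N) X)" by (intro set_encode_ge) auto
  moreover have "N < 2^(2*N)" by (metis less_exp le_less_trans mult_2 le_add1 power_increasing_iff one_less_numeral_iff semiring_norm(76) not_less)
  ultimately show ?thesis by linarith
qed

lemma codeA: assumes "finite A" shows "\<exists>i>N. \<forall>j<N. fR i j \<longleftrightarrow> j \<in> A"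
proof -
  let ?X = "insert (2*N) ((\<lambda>j. 2*j) ` A)"
  define i where "i = set_encode ?X"
  have fin: "finite ?X" using assms by simp
  have gt: "N < i" unfolding i_def using big_gt fin by simp
  have d: "set_decode i = ?X" unfolding i_def using fin by simp
  have "fR i j \<longleftrightarrow> j \<in> A" if "j < N" for j
    using that gt unfolding fR_def d by auto
  then show ?thesis using gt by blast
qed

lemma codeB: assumes "finite A" shows "\<exists>k>N. \<forall>j<N. gR j k \<longleftrightarrow> j \<in> A"
proof -
  let ?X = "insert (2*N) ((\<lambda>j. 2*j+1) ` A)"
  define k where "k = set_encode ?X"
  have fin: "finite ?X" using assms by simp
  have gt: "N < k" unfolding k_def using big_gt fin by simp
  have d: "set_decode k = ?X" unfolding k_def using fin by simp
  have "gR j k \<longleftrightarrow> j \<in> A" if "j < N" for j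
    using that gt unfolding gR_def d by auto
  then show ?thesis using gt by blast
qed

lemma codeC: assumes "finite A" "finite B" shows "\<exists>j>N. (\<forall>i<N. fR i j \<longleftrightarrow> i \<in> A) \<and> (\<forall>k<N. gR j k \<longleftrightarrow> k \<in> B)"
proof -
  let ?X = "insert (2*N) ((\<lambda>j. 2*j) ` A \<union> (\<lambda>j. 2*j+1) ` B)"
  define j where "j = set_encode ?X"
  have fin: "finite ?X" using assms by simp
  have gt: "N < j" unfolding j_def using big_gt fin by simp
  have d: "set_decode j = ?X" unfolding j_def using fin by simp
  have "fR i j \<longleftrightarrow> i \<in> A" if "i < N" for i
    using that gt unfolding fR_def d by auto presburger
  moreover have "gR j k \<longleftrightarrow> k \<in> B" if "k < N" for k
    using that gt unfolding gR_def d by auto presburger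
  ultimately show ?thesis using gt by blast
qed

lemma E1: "\<exists>i. fR i j" using codeA[of "{j}" "Suc j"] by auto
lemma E2: "\<exists>j. gR j k" using codeC[of "{}" "{k}" "Suc k"] by auto
lemma E3: "\<exists>j. fR i j \<and> gR j k"
proof -
  obtain j where "(\<forall>i'<Suc (i+k). fR i' j \<longleftrightarrow> i' \<in> {i}) \<and> (\<forall>k'<Suc (i+k). gR j k' \<longleftrightarrow> k' \<in> {k})"
    using codeC[of "{i}" "{k}" "Suc (i+k)"] by blast
  then have "fR i j" "gR j k" by auto
  then show ?thesis by blast
qed

lemma RR_mod: "RR a b \<Longrightarrow> (a mod 3 = 0 \<and> b mod 3 = 1) \<or> (a mod 3 = 1 \<and> b mod 3 = 2) \<or> (a mod 3 = 0 \<and> b mod 3 = 2)"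
  unfolding RR_def by auto

lemma m3: "(3*i) mod 3 = (0::nat)" "(3*i) div 3 = (i::nat)" "(3*i+1) mod 3 = (1::nat)" "(3*i+1) div 3 = (i::nat)"
  "(3*i+2) mod 3 = (2::nat)" "(3*i+2) div 3 = (i::nat)"
  "Suc (3*i) mod 3 = (1::nat)" "Suc (3*i) div 3 = (i::nat)" by presburger+

lemma RR_below1: "a mod 3 = 1 \<Longrightarrow> \<exists>i. RR (3*i) a"
  using E1[of "a div 3"] unfolding RR_def by (auto simp: m3)
lemma RR_below2: "a mod 3 = 2 \<Longrightarrow> \<exists>j. RR (3*j+1) a"
  using E2[of "a div 3"] unfolding RR_def by (auto simp: m3)
lemma RR_mid: "b mod 3 = 0 \<Longrightarrow> a mod 3 = 2 \<Longrightarrow> \<exists>j. RR b (3*j+1) \<and> RR (3*j+1) a"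
  using E3[of "b div 3" "a div 3"] unfolding RR_def by (auto simp: m3)

lemma M_lev1: "lev1 UNIV RR a \<longleftrightarrow> a mod 3 = 0"
proof
  assume "lev1 UNIV RR a"
  then have nb: "\<not> RR b a" for b unfolding lev1_def by blast
  show "a mod 3 = 0"
  proof (rule ccontr)
    assume "a mod 3 \<noteq> 0"
    then have "a mod 3 = 1 \<or> a mod 3 = 2" by auto
    then show False
    proof
      assume "a mod 3 = 1" then show False using RR_below1 nb by blast
    next
      assume "a mod 3 = 2" then have "RR 0 a" unfolding RR_def by simp
      then show False using nb by blast
    qed
  qed
next
  assume "a mod 3 = 0" then show "lev1 UNIV RR a" unfolding lev1_def using RR_mod by fastforce
qed

lemma M_lev2: "lev2 UNIV RR a \<longleftrightarrow> a mod 3 = 1"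
proof
  assume "lev2 UNIV RR a"
  then obtain b where b: "lev1 UNIV RR b" "cov UNIV RR a b" unfolding lev2_def by blast
  then have b0: "b mod 3 = 0" "RR b a" using M_lev1 unfolding cov_def by auto
  have "a mod 3 \<noteq> 2"
  proof
    assume "a mod 3 = 2"
    then obtain j where "RR b (3*j+1)" "RR (3*j+1) a" using RR_mid[OF b0(1)] by blast
    then show False using b(2) unfolding cov_def by blast
  qed
  then show "a mod 3 = 1" using RR_mod[OF b0(2)] b0 by auto
next
  assume a: "a mod 3 = 1"
  obtain i where i: "RR (3*i) a" using RR_below1[OF a] by blast
  have "lev1 UNIV RR (3*i)" using M_lev1 by (simp add: m3)
  moreover have "cov UNIV RR a (3*i)" unfolding cov_def
  proof (intro conjI i notI)
    assume "\<exists>c\<in>UNIV. RR (3*i) c \<and> RR c a"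
    then obtain c where "RR (3*i) c" "RR c a" by blast
    then show False using RR_mod[of "3*i" c] RR_mod[of c a] a by auto
  qed
  ultimately show "lev2 UNIV RR a" unfolding lev2_def by blast
qed

lemma M_lev3: "lev3 UNIV RR a \<longleftrightarrow> a mod 3 = 2"
proof
  assume "lev3 UNIV RR a"
  then obtain b where b: "lev2 UNIV RR b" "cov UNIV RR a b" unfolding lev3_def by blast
  then have "b mod 3 = 1" "RR b a" using M_lev2 unfolding cov_def by auto
  then show "a mod 3 = 2" using RR_mod by fastforce
next
  assume a: "a mod 3 = 2"
  obtain j where j: "RR (3*j+1) a" using RR_below2[OF a] by blast
  have "lev2 UNIV RR (3*j+1)" using M_lev2 by (simp add: m3)
  moreover have "cov UNIV RR a (3*j+1)" unfolding cov_def
  proof (intro conjI j notI)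
    assume "\<exists>c\<in>UNIV. RR (3*j+1) c \<and> RR c a"
    then obtain c where "RR (3*j+1) c" "RR c a" by blast
    then show False using RR_mod[of "3*j+1" c] RR_mod[of c a] a by (auto simp: m3)
  qed
  ultimately show "lev3 UNIV RR a" unfolding lev3_def by blast
qed

lemma eq3: "a mod 3 = b mod 3 \<Longrightarrow> a div 3 = b div 3 \<Longrightarrow> (a::nat) = b" by (metis div_mult_mod_eq)

lemma bound_sl: "x \<in> set (xs::nat list) \<Longrightarrow> x < Suc (sum_list xs)"
  using member_le_sum_list le_imp_less_Suc by blast

lemma M_PA: "PA UNIV RR xs ys zs"
  unfolding PA_def M_lev1 M_lev2
proof (intro impI)
  assume h: "(\<forall>x\<in>set (xs@ys). x mod 3 = 1) \<and> (\<forall>x\<in>set zs. x mod 3 = 0) \<and> distinct (xs@ys) \<and> distinct zs"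
  define N where "N = Suc (sum_list (xs@ys@zs))"
  have bd: "x < N" if "x \<in> set (xs@ys@zs)" for x unfolding N_def using bound_sl[OF that] .
  obtain i where i: "i > N" "\<forall>j<N. fR i j \<longleftrightarrow> j \<in> (\<lambda>x. x div 3) ` set xs"
    using codeA[of "(\<lambda>x. x div 3) ` set xs" N] by blast
  have c0: "(3*i) mod 3 = 0" "(3*i) div 3 = i" by (simp_all add: m3)
  have "\<forall>x\<in>set zs. 3*i \<noteq> x" using bd i(1) by fastforce
  moreover have "\<forall>x\<in>set xs. RR (3*i) x"
  proof
    fix x assume x: "x \<in> set xs"
    have "x div 3 < N" using bd[of x] x div_le_dividend[of x 3] by auto
    then have "fR i (x div 3)" using i(2) x by blast
    then show "RR (3*i) x" unfolding RR_def using c0 h x by simp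
  qed
  moreover have "\<forall>y\<in>set ys. \<not> RR (3*i) y"
  proof (intro ballI notI)
    fix y assume y: "y \<in> set ys" and r: "RR (3*i) y"
    have y1: "y mod 3 = 1" using h y by simp
    then have "fR i (y div 3)" using r c0 unfolding RR_def by simp
    moreover have "y div 3 < N" using bd[of y] y div_le_dividend[of y 3] by auto
    ultimately have "y div 3 \<in> (\<lambda>x. x div 3) ` set xs" using i(2) by blast
    then obtain x where x: "x \<in> set xs" "x div 3 = y div 3" by (auto elim!: imageE)
    then have "x = y" using eq3 h y1 by auto
    then show False using x y h by auto
  qed
  ultimately show "\<exists>c\<in>UNIV. c mod 3 = 0 \<and> (\<forall>x\<in>set zs. c \<noteq> x) \<and> (\<forall>x\<in>set xs. RR c x) \<and> (\<forall>x\<in>set ys. \<not> RR c x)"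
    using c0 by - (rule bexI[of _ "3*i"], blast, rule UNIV_I)
qed

lemma M_PB: "PB UNIV RR xs ys zs"
  unfolding PB_def M_lev3 M_lev2
proof (intro impI)
  assume h: "(\<forall>x\<in>set (xs@ys). x mod 3 = 1) \<and> (\<forall>x\<in>set zs. x mod 3 = 2) \<and> distinct (xs@ys) \<and> distinct zs"
  define N where "N = Suc (sum_list (xs@ys@zs))"
  have bd: "x < N" if "x \<in> set (xs@ys@zs)" for x unfolding N_def using bound_sl[OF that] .
  obtain k where k: "k > N" "\<forall>j<N. gR j k \<longleftrightarrow> j \<in> (\<lambda>x. x div 3) ` set xs"
    using codeB[of "(\<lambda>x. x div 3) ` set xs" N] by blast
  have c0: "(3*k+2) mod 3 = 2" "(3*k+2) div 3 = k" by (simp_all only: m3)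
  have "\<forall>x\<in>set zs. 3*k+2 \<noteq> x" using bd k(1) by fastforce
  moreover have "\<forall>x\<in>set xs. RR x (3*k+2)"
  proof
    fix x assume x: "x \<in> set xs"
    have "x div 3 < N" using bd[of x] x div_le_dividend[of x 3] by auto
    then have "gR (x div 3) k" using k(2) x by blast
    then show "RR x (3*k+2)" unfolding RR_def using c0 h x by simp
  qed
  moreover have "\<forall>y\<in>set ys. \<not> RR y (3*k+2)"
  proof (intro ballI notI)
    fix y assume y: "y \<in> set ys" and r: "RR y (3*k+2)"
    have y1: "y mod 3 = 1" using h y by simp
    then have "gR (y div 3) k" using r c0 unfolding RR_def by simp
    moreover have "y div 3 < N" using bd[of y] y div_le_dividend[of y 3] by auto
    ultimately have "y div 3 \<in> (\<lambda>x. x div 3) ` set xs" using k(2) by blast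
    then obtain x where x: "x \<in> set xs" "x div 3 = y div 3" by (auto elim!: imageE)
    then have "x = y" using eq3 h y1 by auto
    then show False using x y h by auto
  qed
  ultimately show "\<exists>c\<in>UNIV. c mod 3 = 2 \<and> (\<forall>x\<in>set zs. c \<noteq> x) \<and> (\<forall>x\<in>set xs. RR x c) \<and> (\<forall>x\<in>set ys. \<not> RR x c)"
    using c0 by - (rule bexI[of _ "3*k+2"], blast, rule UNIV_I)
qed

lemma M_PC: "PC UNIV RR xs ys xs' ys' zs"
  unfolding PC_def M_lev1 M_lev2 M_lev3
proof (intro impI)
  assume h: "(\<forall>x\<in>set (xs@ys). x mod 3 = 0) \<and> (\<forall>x\<in>set (xs'@ys'). x mod 3 = 2) \<and> (\<forall>x\<in>set zs. x mod 3 = 1)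
     \<and> distinct (xs@ys) \<and> distinct (xs'@ys') \<and> distinct zs"
  define N where "N = Suc (sum_list (xs@ys@xs'@ys'@zs))"
  have bd: "x < N" if "x \<in> set (xs@ys@xs'@ys'@zs)" for x unfolding N_def using bound_sl[OF that] .
  obtain j where j: "j > N" "\<forall>i<N. fR i j \<longleftrightarrow> i \<in> (\<lambda>x. x div 3) ` set xs"
      "\<forall>k<N. gR j k \<longleftrightarrow> k \<in> (\<lambda>x. x div 3) ` set xs'"
    using codeC[of "(\<lambda>x. x div 3) ` set xs" "(\<lambda>x. x div 3) ` set xs'" N] by blast
  have c0: "(3*j+1) mod 3 = 1" "(3*j+1) div 3 = j" by (simp_all only: m3)
  have "\<forall>x\<in>set zs. 3*j+1 \<noteq> x" using bd j(1) by fastforce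
  moreover have "\<forall>x\<in>set xs. RR x (3*j+1)"
  proof
    fix x assume x: "x \<in> set xs"
    have "x div 3 < N" using bd[of x] x div_le_dividend[of x 3] by auto
    then have "fR (x div 3) j" using j(2) x by blast
    then show "RR x (3*j+1)" unfolding RR_def using c0 h x by simp
  qed
  moreover have "\<forall>y\<in>set ys. \<not> RR y (3*j+1)"
  proof (intro ballI notI)
    fix y assume y: "y \<in> set ys" and r: "RR y (3*j+1)"
    have y1: "y mod 3 = 0" using h y by simp
    then have "fR (y div 3) j" using r c0 unfolding RR_def by simp
    moreover have "y div 3 < N" using bd[of y] y div_le_dividend[of y 3] by auto
    ultimately have "y div 3 \<in> (\<lambda>x. x div 3) ` set xs" using j(2) by blast
    then obtain x where x: "x \<in> set xs" "x div 3 = y div 3" by (auto elim!: imageE)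
    then have "x = y" using eq3 h y1 by auto
    then show False using x y h by auto
  qed
  moreover have "\<forall>x\<in>set xs'. RR (3*j+1) x"
  proof
    fix x assume x: "x \<in> set xs'"
    have "x div 3 < N" using bd[of x] x div_le_dividend[of x 3] by auto
    then have "gR j (x div 3)" using j(3) x by blast
    then show "RR (3*j+1) x" unfolding RR_def using c0 h x by simp
  qed
  moreover have "\<forall>y\<in>set ys'. \<not> RR (3*j+1) y"
  proof (intro ballI notI)
    fix y assume y: "y \<in> set ys'" and r: "RR (3*j+1) y"
    have y1: "y mod 3 = 2" using h y by simp
    then have "gR j (y div 3)" using r c0 unfolding RR_def by simp
    moreover have "y div 3 < N" using bd[of y] y div_le_dividend[of y 3] by auto
    ultimately have "y div 3 \<in> (\<lambda>x. x div 3) ` set xs'" using j(3) by blast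
    then obtain x where x: "x \<in> set xs'" "x div 3 = y div 3" by (auto elim!: imageE)
    then have "x = y" using eq3 h y1 by auto
    then show False using x y h by auto
  qed
  ultimately show "\<exists>c\<in>UNIV. c mod 3 = 1 \<and> (\<forall>x\<in>set zs. c \<noteq> x) \<and> (\<forall>x\<in>set xs. RR x c)
        \<and> (\<forall>x\<in>set ys. \<not> RR x c) \<and> (\<forall>x\<in>set xs'. RR c x) \<and> (\<forall>x\<in>set ys'. \<not> RR c x)"
    using c0 by - (rule bexI[of _ "3*j+1"], blast, rule UNIV_I)
qed

lemma M_SM: "SM (UNIV :: nat set) RR"
proof -
  obtain j where j: "fR 0 j" "gR j 0" using E3 by blast
  have "RR 0 (3*j+1)" "RR (3*j+1) 2" unfolding RR_def using j by (simp_all add: m3)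
  then have c3: "\<exists>a\<in>(UNIV::nat set). \<exists>b\<in>UNIV. \<exists>c\<in>UNIV. RR a b \<and> RR b c" by blast
  have irr: "\<forall>a\<in>(UNIV::nat set). \<not> RR a a" unfolding RR_def by auto
  have tr: "\<forall>a\<in>(UNIV::nat set). \<forall>b\<in>UNIV. \<forall>c\<in>UNIV. RR a b \<and> RR b c \<longrightarrow> RR a c"
    using RR_mod unfolding RR_def by fastforce
  have nc: "\<not>(\<exists>a\<in>(UNIV::nat set). \<exists>b\<in>UNIV. \<exists>c\<in>UNIV. \<exists>d\<in>UNIV. RR a b \<and> RR b c \<and> RR c d)"
  proof
    assume "\<exists>a\<in>(UNIV::nat set). \<exists>b\<in>UNIV. \<exists>c\<in>UNIV. \<exists>d\<in>UNIV. RR a b \<and> RR b c \<and> RR c d"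
    then obtain a b c d where "RR a b" "RR b c" "RR c d" by blast
    then show False using RR_mod[of a b] RR_mod[of b c] RR_mod[of c d] by auto
  qed
  show ?thesis unfolding SM_def using c3 irr tr nc M_PA M_PB M_PC by blast
qed


theorem mainTheorem3:
  shows "(\<exists>(D :: nat set) R. is_model D R T_as_irr \<and> infinite D)
    \<and> (\<forall>(D1 :: 'a set) R1 (D2 :: 'b set) R2.
          is_model D1 R1 T_as_irr \<and> countable D1 \<and> infinite D1 \<and>
          is_model D2 R2 T_as_irr \<and> countable D2 \<and> infinite D2 \<longrightarrow>
          isomorphic D1 R1 D2 R2)
    \<and> (\<forall>(D :: 'c set) R. is_model D R T_as_irr \<longrightarrow> infinite D)
    \<and> (\<forall>(D1 :: 'd set) R1 (D2 :: 'e set) R2 \<phi>.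
          is_model D1 R1 T_as_irr \<and> is_model D2 R2 T_as_irr \<and> sentence \<phi> \<longrightarrow>
          (holds D1 R1 \<phi> \<longleftrightarrow> holds D2 R2 \<phi>))"
proof -
  have h1: "\<exists>(D :: nat set) R. is_model D R T_as_irr \<and> infinite D"
  proof -
    have "is_model (UNIV :: nat set) RR T_as_irr" using M_SM is_model_SM by blast
    then show ?thesis using infinite_UNIV_nat by blast
  qed
  have h2: "\<forall>(D1 :: 'a set) R1 (D2 :: 'b set) R2.
          is_model D1 R1 T_as_irr \<and> countable D1 \<and> infinite D1 \<and>
          is_model D2 R2 T_as_irr \<and> countable D2 \<and> infinite D2 \<longrightarrow>
          isomorphic D1 R1 D2 R2"
  proof (intro allI impI)
    fix D1 :: "'a set" and R1 and D2 :: "'b set" and R2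
    assume "is_model D1 R1 T_as_irr \<and> countable D1 \<and> infinite D1 \<and>
          is_model D2 R2 T_as_irr \<and> countable D2 \<and> infinite D2"
    then show "isomorphic D1 R1 D2 R2" using categorical[of D1 R1 D2 R2] is_model_SM[of D1 R1] is_model_SM[of D2 R2] by blast
  qed
  have h3: "\<forall>(D :: 'c set) R. is_model D R T_as_irr \<longrightarrow> infinite D"
  proof (intro allI impI)
    fix D :: "'c set" and R assume "is_model D R T_as_irr"
    then show "infinite D" using sm.D_infinite[OF sm.intro, of D R] is_model_SM[of D R] by blast
  qed
  have h4: "\<forall>(D1 :: 'd set) R1 (D2 :: 'e set) R2 \<phi>.
          is_model D1 R1 T_as_irr \<and> is_model D2 R2 T_as_irr \<and> sentence \<phi> \<longrightarrow>
          (holds D1 R1 \<phi> \<longleftrightarrow> holds D2 R2 \<phi>)"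
  proof (intro allI impI)
    fix D1 :: "'d set" and R1 and D2 :: "'e set" and R2 and \<phi>
    assume "is_model D1 R1 T_as_irr \<and> is_model D2 R2 T_as_irr \<and> sentence \<phi>"
    then show "holds D1 R1 \<phi> \<longleftrightarrow> holds D2 R2 \<phi>" using complete[of D1 R1 D2 R2 \<phi>] is_model_SM[of D1 R1] is_model_SM[of D2 R2] by blast
  qed
  show ?thesis using h1 h2 h3 h4 by (intro conjI)
qed

end
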